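(* Let $z\in\mathrm{Hilb}$ be a Borel-fixed point with degree-$m$ filter $\mathcal F$ and order ideal $\mathcal R$. A nonzero tangent vector $(c_{AB})_{A\in\mathcal F,B\in\mathcal R}\in T_z\mathrm{Hilb}$, i.e. the first-order deformation $(\mathbf x^A+\varepsilon\sum_{B\in\mathcal R}c_{AB}\mathbf x^B\mid A\in\mathcal F)$, is an eigenvector for the Borel subgroup of invertible upper-triangular matrices if and only if: (1) there exists $K\in\mathbb Z^{n+1}$ with entries summing to $0$ such that $c_{AB}\neq0\implies B-A=K$; and (2) with $\mathcal F'=\mathcal F\setminus\{A\in\mathcal F:\exists B\in\mathcal R,\ c_{AB}\neq0\}$ and $\mathcal F''=\mathcal F\cup\{B\in\mathcal R:\exists A\in\mathcal F,\ c_{AB}\neq0\}$: (i) $\mathcal F'$ and $\mathcal F''$ are filters of $\mathcal P(m,n)$; (ii) for each $A=(a_0,\dots,a_n)\in\mathcal F\setminus\mathcal F'$ with $B=A+K=(b_0,\dots,b_n)$ and each $i\in\{1,\dots,n\}$, if $A+\Delta_i\in\mathcal F\setminus\mathcal F'$ then $c_{A+\Delta_i,B+\Delta_i}=\frac{b_i}{a_i}c_{AB}$.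
   Context: $K$ algebraically closed of characteristic $0$, $S=K[x_0,\dots,x_n]$; $g=(a_{ij})\in\mathrm{GL}(n+1,K)$ acts by $x_i\mapsto\sum_j a_{ji}x_j$. $\mathrm{Hilb}\subseteq\mathrm{Grass}(r,S_m)$ is the Hilbert scheme of subschemes of $\mathbb P^n$ with a fixed Hilbert polynomial, embedded via $Z\mapsto I_m$ where $I$ is the saturated ideal of $Z$ and $m$ is the Gotzmann number (so $m$ is at least the regularity of every such ideal). $z$ is Borel-fixed if its ideal is fixed by all invertible upper-triangular matrices. $\mathcal F$ (resp. $\mathcal R$) is the set of exponent vectors of degree-$m$ monomials in (resp. not in) $I_m$. $T_z\mathrm{Grass}=\mathrm{Hom}_K(I_m,S_m/I_m)$, with $(c_{AB})$ meaning $\mathbf x^A\mapsto\sum_{B}c_{AB}\mathbf x^B$, equivalently the ideal of $S[\varepsilon]$ ($\varepsilon^2=0$) generated by $\mathbf x^A+\varepsilon\sum_Bc_{AB}\mathbf x^B$, $A\in\mathcal F$; it lies in $T_z\mathrm{Hilb}$ iff that ideal is flat over $K[\varepsilon]$. The Borel subgroup fixes $z$ and acts on $T_z\mathrm{Hilb}$ by acting on this ideal (on the $x_i$, fixing $\varepsilon$) and rewriting the degree-$m$ part with generators $\mathbf x^A+\varepsilon\sum_Bc'_{AB}\mathbf x^B$. An eigenvector is a nonzero $v$ with $g\cdot v\in Kv$ for all $g$ in the group. $E_i$ denotes the $i$-th standard basis vector of $\mathbb Z^{n+1}$ (indices $0,\dots,n$), $\Delta_i=E_{i-1}-E_i$.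 $\mathcal P(m,n)$ is the poset of degree-$m$ exponent vectors with order generated by $A\prec A+\Delta_i$; a filter is an up-closed subset. *)

theory Defs
  imports "HOL-Library.Poly_Mapping" "HOL-Computational_Algebra.Polynomial"
begin

(* Exponent vectors are finitely supported maps nat =>0 nat; a monomial x^A in
   the variables x_0..x_n has Poly_Mapping.keys A \<subseteq> {0..n}. *)

type_synonym expo = "nat \<Rightarrow>\<^sub>0 nat"
type_synonym 'k mpoly = "expo \<Rightarrow>\<^sub>0 'k"

definition tdeg :: "expo \<Rightarrow> nat" where
  "tdeg A = (\<Sum>i\<in>Poly_Mapping.keys A. Poly_Mapping.lookup A i)"

definition is_expo :: "nat \<Rightarrow> expo \<Rightarrow> bool" where
  "is_expo n A \<longleftrightarrow> Poly_Mapping.keys A \<subseteq> {0..n}"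

(* degree-d exponent vectors in n+1 variables: the elements of P(d,n) *)
definition Pmn :: "nat \<Rightarrow> nat \<Rightarrow> expo set" where
  "Pmn m n = {A. is_expo n A \<and> tdeg A = m}"

definition mon :: "expo \<Rightarrow> 'k::comm_ring_1 mpoly" where
  "mon A = Poly_Mapping.single A 1"

definition const :: "'k::comm_ring_1 \<Rightarrow> 'k mpoly" where
  "const c = Poly_Mapping.single 0 c"

definition var :: "nat \<Rightarrow> 'k::comm_ring_1 mpoly" where
  "var i = mon (Poly_Mapping.single i 1)"

definition Spoly :: "nat \<Rightarrow> 'k::comm_ring_1 mpoly set" where
  "Spoly n = {p. \<forall>A\<in>Poly_Mapping.keys p. is_expo n A}"

definition homog :: "nat \<Rightarrow> 'k::comm_ring_1 mpoly \<Rightarrow> bool" where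
  "homog d p \<longleftrightarrow> (\<forall>A\<in>Poly_Mapping.keys p. tdeg A = d)"

definition homog_part :: "nat \<Rightarrow> 'k::comm_ring_1 mpoly \<Rightarrow> 'k mpoly" where
  "homog_part d p = (\<Sum>A\<in>{A\<in>Poly_Mapping.keys p. tdeg A = d}. const (Poly_Mapping.lookup p A) * mon A)"

definition deg_part :: "nat \<Rightarrow> nat \<Rightarrow> 'k::comm_ring_1 mpoly set \<Rightarrow> 'k mpoly set" where
  "deg_part n d I = {p\<in>I. p \<in> Spoly n \<and> homog d p}"

definition kdim :: "'k::field mpoly set \<Rightarrow> nat" where
  "kdim V = vector_space.dim (\<lambda>c p. const c * p) V"

definition is_ideal :: "nat \<Rightarrow> 'k::comm_ring_1 mpoly set \<Rightarrow> bool" where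
  "is_ideal n I \<longleftrightarrow> I \<subseteq> Spoly n \<and> 0 \<in> I \<and> (\<forall>f\<in>I. \<forall>g\<in>I. f + g \<in> I)
     \<and> (\<forall>f\<in>I. \<forall>h\<in>Spoly n. h * f \<in> I)"

definition homog_ideal :: "nat \<Rightarrow> 'k::comm_ring_1 mpoly set \<Rightarrow> bool" where
  "homog_ideal n I \<longleftrightarrow> is_ideal n I \<and> (\<forall>f\<in>I. \<forall>d. homog_part d f \<in> I)"

(* I = (I : m^\<infinity>), m = (x_0,...,x_n); m^N is spanned by the monomials of degree N *)
definition saturated :: "nat \<Rightarrow> 'k::comm_ring_1 mpoly set \<Rightarrow> bool" where
  "saturated n I \<longleftrightarrow> (\<forall>f\<in>Spoly n. (\<exists>N. \<forall>M\<in>Pmn N n. mon M * f \<in> I) \<longrightarrow> f \<in> I)"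

definition hilb_fun :: "nat \<Rightarrow> 'k::field mpoly set \<Rightarrow> nat \<Rightarrow> nat" where
  "hilb_fun n I d = kdim (deg_part n d (Spoly n :: 'k mpoly set)) - kdim (deg_part n d I)"

(* m is the Gotzmann number of the Hilbert polynomial of S/I:
   P(t) = \<Sum>_{i=1}^{m} binom(t + a_i - (i-1), a_i), a_1 \<ge> ... \<ge> a_m \<ge> 0 *)
definition gotzmann_number :: "nat \<Rightarrow> 'k::field mpoly set \<Rightarrow> nat \<Rightarrow> bool" where
  "gotzmann_number n I m \<longleftrightarrow>
     (\<exists>a::nat list. length a = m \<and> sorted_wrt (\<ge>) a \<and>
        (\<exists>N. \<forall>d\<ge>N. hilb_fun n I d = (\<Sum>i<m. (d + a!i - i) choose (a!i))))"

(* matrices g = (a_ij), 0 \<le> i,j \<le> n *)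
definition upper_triangular :: "nat \<Rightarrow> (nat \<Rightarrow> nat \<Rightarrow> 'k::comm_ring_1) \<Rightarrow> bool" where
  "upper_triangular n g \<longleftrightarrow> (\<forall>i\<le>n. \<forall>j\<le>n. j < i \<longrightarrow> g i j = 0)"

definition invertible_mat :: "nat \<Rightarrow> (nat \<Rightarrow> nat \<Rightarrow> 'k::comm_ring_1) \<Rightarrow> bool" where
  "invertible_mat n g \<longleftrightarrow> (\<exists>h. \<forall>i\<le>n. \<forall>j\<le>n.
      (\<Sum>k\<le>n. g i k * h k j) = (if i = j then 1 else 0) \<and>
      (\<Sum>k\<le>n. h i k * g k j) = (if i = j then 1 else 0))"

definition borel :: "nat \<Rightarrow> (nat \<Rightarrow> nat \<Rightarrow> 'k::comm_ring_1) set" where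
  "borel n = {g. upper_triangular n g \<and> invertible_mat n g}"

(* action of g on S: x_i \<mapsto> \<Sum>_j a_ji x_j, extended to a ring homomorphism *)
definition lin_form :: "nat \<Rightarrow> (nat \<Rightarrow> nat \<Rightarrow> 'k::comm_ring_1) \<Rightarrow> nat \<Rightarrow> 'k mpoly" where
  "lin_form n g i = (\<Sum>j\<le>n. const (g j i) * var j)"

definition act :: "nat \<Rightarrow> (nat \<Rightarrow> nat \<Rightarrow> 'k::comm_ring_1) \<Rightarrow> 'k mpoly \<Rightarrow> 'k mpoly" where
  "act n g p = (\<Sum>A\<in>Poly_Mapping.keys p. const (Poly_Mapping.lookup p A) * (\<Prod>i\<in>Poly_Mapping.keys A. lin_form n g i ^ Poly_Mapping.lookup A i))"

definition borel_fixed :: "nat \<Rightarrow> 'k::comm_ring_1 mpoly set \<Rightarrow> bool" where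
  "borel_fixed n I \<longleftrightarrow> (\<forall>g\<in>borel n. act n g ` I = I)"

definition Fset :: "nat \<Rightarrow> nat \<Rightarrow> 'k::comm_ring_1 mpoly set \<Rightarrow> expo set" where
  "Fset n m I = {A\<in>Pmn m n. (mon A :: 'k mpoly) \<in> I}"

definition Rset :: "nat \<Rightarrow> nat \<Rightarrow> 'k::comm_ring_1 mpoly set \<Rightarrow> expo set" where
  "Rset n m I = {A\<in>Pmn m n. (mon A :: 'k mpoly) \<notin> I}"

(* Elements of S[\<epsilon>] = S \<oplus> \<epsilon> S are pairs (f0, f1) standing for f0 + \<epsilon> f1.
   Membership in the ideal of S[\<epsilon>] generated by gen X (X finite index set):
   (f0,f1) = \<Sum> (a_x + \<epsilon> b_x) (g0_x + \<epsilon> g1_x) with a_x, b_x \<in> S. *)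
definition eps_ideal :: "nat \<Rightarrow> 'i set \<Rightarrow> ('i \<Rightarrow> 'k::comm_ring_1 mpoly \<times> 'k mpoly)
     \<Rightarrow> ('k mpoly \<times> 'k mpoly) set" where
  "eps_ideal n X gen = {(f0, f1). f0 \<in> Spoly n \<and> f1 \<in> Spoly n \<and>
     (\<exists>a b. (\<forall>x\<in>X. a x \<in> Spoly n \<and> b x \<in> Spoly n) \<and>
        f0 = (\<Sum>x\<in>X. a x * fst (gen x)) \<and>
        f1 = (\<Sum>x\<in>X. a x * snd (gen x) + b x * fst (gen x)))}"

(* the first-order deformation ideal (x^A + \<epsilon> \<Sum>_B c_AB x^B | A \<in> F) *)
definition def_gen :: "nat \<Rightarrow> nat \<Rightarrow> 'k::comm_ring_1 mpoly set \<Rightarrow> (expo \<Rightarrow> expo \<Rightarrow> 'k)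
     \<Rightarrow> expo \<Rightarrow> 'k mpoly \<times> 'k mpoly" where
  "def_gen n m I c A = (mon A, \<Sum>B\<in>Rset n m I. const (c A B) * mon B)"

definition def_ideal :: "nat \<Rightarrow> nat \<Rightarrow> 'k::comm_ring_1 mpoly set \<Rightarrow> (expo \<Rightarrow> expo \<Rightarrow> 'k)
     \<Rightarrow> ('k mpoly \<times> 'k mpoly) set" where
  "def_ideal n m I c = eps_ideal n (Fset n m I) (def_gen n m I c)"

(* tangent vectors to Grass at z: c_AB indexed by A \<in> F, B \<in> R *)
definition grass_tangent :: "nat \<Rightarrow> nat \<Rightarrow> 'k::comm_ring_1 mpoly set \<Rightarrow> (expo \<Rightarrow> expo \<Rightarrow> 'k) \<Rightarrow> bool" where
  "grass_tangent n m I c \<longleftrightarrow> (\<forall>A B. c A B \<noteq> 0 \<longrightarrow> A \<in> Fset n m I \<and> B \<in> Rset n m I)"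

(* flatness of S[\<epsilon>]/J over K[\<epsilon>]: (local) flatness criterion, i.e.
   the kernel of multiplication by \<epsilon> equals \<epsilon>(S[\<epsilon>]/J):
   \<epsilon> f \<in> J  \<Longrightarrow>  f \<in> J + \<epsilon> S[\<epsilon>] *)
definition eps_flat :: "nat \<Rightarrow> ('k::comm_ring_1 mpoly \<times> 'k mpoly) set \<Rightarrow> bool" where
  "eps_flat n J \<longleftrightarrow> (\<forall>f\<in>Spoly n. (0, f) \<in> J \<longrightarrow> (\<exists>h\<in>Spoly n. (f, h) \<in> J))"

definition hilb_tangent :: "nat \<Rightarrow> nat \<Rightarrow> 'k::comm_ring_1 mpoly set \<Rightarrow> (expo \<Rightarrow> expo \<Rightarrow> 'k) \<Rightarrow> bool" where
  "hilb_tangent n m I c \<longleftrightarrow> grass_tangent n m I c \<and> eps_flat n (def_ideal n m I c)"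

definition act_eps :: "nat \<Rightarrow> (nat \<Rightarrow> nat \<Rightarrow> 'k::comm_ring_1) \<Rightarrow> ('k mpoly \<times> 'k mpoly) set
     \<Rightarrow> ('k mpoly \<times> 'k mpoly) set" where
  "act_eps n g J = (\<lambda>(f0, f1). (act n g f0, act n g f1)) ` J"

(* g \<cdot> c = c' : the degree-m part of g \<cdot> J is generated by x^A + \<epsilon> \<Sum>_B c'_AB x^B *)
definition borel_act_is :: "nat \<Rightarrow> nat \<Rightarrow> 'k::comm_ring_1 mpoly set \<Rightarrow> (nat \<Rightarrow> nat \<Rightarrow> 'k)
     \<Rightarrow> (expo \<Rightarrow> expo \<Rightarrow> 'k) \<Rightarrow> (expo \<Rightarrow> expo \<Rightarrow> 'k) \<Rightarrow> bool" where
  "borel_act_is n m I g c c' \<longleftrightarrow> grass_tangent n m I c' \<and>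
     (\<forall>A\<in>Fset n m I. def_gen n m I c' A \<in> act_eps n g (def_ideal n m I c))"

definition borel_eigenvector :: "nat \<Rightarrow> nat \<Rightarrow> 'k::comm_ring_1 mpoly set \<Rightarrow> (expo \<Rightarrow> expo \<Rightarrow> 'k) \<Rightarrow> bool" where
  "borel_eigenvector n m I c \<longleftrightarrow> (\<exists>A B. c A B \<noteq> 0) \<and>
     (\<forall>g\<in>borel n. \<exists>t. borel_act_is n m I g c (\<lambda>A B. t * c A B))"

(* A + \<Delta>_i = A + E_{i-1} - E_i  (meaningful when a_i \<ge> 1) *)
definition addDelta :: "expo \<Rightarrow> nat \<Rightarrow> expo" where
  "addDelta A i = A + Poly_Mapping.single (i - 1) 1 - Poly_Mapping.single i 1"

definition P_step :: "nat \<Rightarrow> nat \<Rightarrow> expo \<Rightarrow> expo \<Rightarrow> bool" where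
  "P_step m n A A' \<longleftrightarrow> A \<in> Pmn m n \<and> (\<exists>i\<in>{1..n}. 1 \<le> Poly_Mapping.lookup A i \<and> A' = addDelta A i)"

definition P_le :: "nat \<Rightarrow> nat \<Rightarrow> expo \<Rightarrow> expo \<Rightarrow> bool" where
  "P_le m n = (P_step m n)\<^sup>*\<^sup>*"

definition is_filter :: "nat \<Rightarrow> nat \<Rightarrow> expo set \<Rightarrow> bool" where
  "is_filter m n X \<longleftrightarrow> X \<subseteq> Pmn m n \<and> (\<forall>A\<in>X. \<forall>A'. P_le m n A A' \<longrightarrow> A' \<in> X)"

end

theory Submission
  imports Defs
begin



lemma lookup_const_mult: "Poly_Mapping.lookup (const c * p) A = c * Poly_Mapping.lookup p A"
  unfolding const_def mult_map_scale_conv_mult[symmetric]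
  by (simp add: map.rep_eq when_def)

lemma const_mult: "const a * const b = (const (a*b) :: 'k::comm_ring_1 mpoly)"
  by (simp add: const_def mult_single)

lemma const_add: "const (a + b) = (const a + const b :: 'k::comm_ring_1 mpoly)"
  by (simp add: const_def single_add)

lemma const_diff: "const (a - b) = (const a - const b :: 'k::comm_ring_1 mpoly)"
  by (simp add: const_def single_diff)

lemma const_0[simp]: "const 0 = (0 :: 'k::comm_ring_1 mpoly)"
  by (simp add: const_def)

lemma const_1[simp]: "const 1 = (1 :: 'k::comm_ring_1 mpoly)"
  by (simp add: const_def)

lemma const_sum: "finite S \<Longrightarrow> const (\<Sum>x\<in>S. f x) = (\<Sum>x\<in>S. const (f x) :: 'k::comm_ring_1 mpoly)"
  by (induction S rule: finite_induct) (auto simp: const_add)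

lemma const_prod: "finite S \<Longrightarrow> const (\<Prod>x\<in>S. f x) = (\<Prod>x\<in>S. const (f x) :: 'k::comm_ring_1 mpoly)"
  by (induction S rule: finite_induct) (auto simp: const_mult[symmetric])

lemma const_power: "const (a ^ k) = (const a ^ k :: 'k::comm_ring_1 mpoly)"
  by (induction k) (auto simp: const_mult[symmetric])

lemma mon_mult: "mon A * mon B = (mon (A + B) :: 'k::comm_ring_1 mpoly)"
  by (simp add: mon_def mult_single)

lemma const_mon: "const a * mon A = (Poly_Mapping.single A a :: 'k::comm_ring_1 mpoly)"
  by (simp add: mon_def const_def mult_single)

lemma lookup_mon: "Poly_Mapping.lookup (mon A :: 'k::comm_ring_1 mpoly) B = (if A = B then 1 else 0)"
  by (simp add: mon_def lookup_single when_def)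

lemma keys_mon[simp]: "Poly_Mapping.keys (mon A :: 'k::comm_ring_1 mpoly) = {A}"
  by (simp add: mon_def)

lemma mon_0[simp]: "mon 0 = (1 :: 'k::comm_ring_1 mpoly)"
  by (simp add: mon_def)

lemma pm_repr:
  fixes p :: "'a \<Rightarrow>\<^sub>0 'b::comm_monoid_add"
  assumes "finite S" "Poly_Mapping.keys p \<subseteq> S"
  shows "p = (\<Sum>x\<in>S. Poly_Mapping.single x (Poly_Mapping.lookup p x))"
proof (rule poly_mapping_eqI)
  fix k
  have "(\<Sum>x\<in>S. Poly_Mapping.lookup (Poly_Mapping.single x (Poly_Mapping.lookup p x)) k)
      = (\<Sum>x\<in>S. if x = k then Poly_Mapping.lookup p k else 0)"
    by (rule sum.cong) (auto simp: lookup_single when_def)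
  also have "\<dots> = Poly_Mapping.lookup p k"
    using assms by (auto simp: in_keys_iff)
  finally show "Poly_Mapping.lookup p k = Poly_Mapping.lookup (\<Sum>x\<in>S. Poly_Mapping.single x (Poly_Mapping.lookup p x)) k"
    by (simp add: lookup_sum)
qed

lemma mpoly_repr:
  fixes p :: "'k::comm_ring_1 mpoly"
  assumes "finite S" "Poly_Mapping.keys p \<subseteq> S"
  shows "p = (\<Sum>x\<in>S. const (Poly_Mapping.lookup p x) * mon x)"
  using pm_repr[OF assms] by (simp add: const_mon)

lemma lookup_sum_const_mon:
  "finite S \<Longrightarrow> Poly_Mapping.lookup (\<Sum>x\<in>S. const (f x) * mon x :: 'k::comm_ring_1 mpoly) B
     = (if B \<in> S then f B else 0)"
  by (simp add: lookup_sum lookup_const_mult lookup_mon if_distrib cong: if_cong)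

lemma keys_sum_const_mon:
  "finite S \<Longrightarrow> Poly_Mapping.keys (\<Sum>x\<in>S. const (f x) * mon x :: 'k::comm_ring_1 mpoly) \<subseteq> S"
  by (auto simp: in_keys_iff lookup_sum_const_mon split: if_splits)

section \<open>Exponent arithmetic\<close>

lemma tdeg_superset:
  assumes "finite S" "Poly_Mapping.keys A \<subseteq> S"
  shows "tdeg A = (\<Sum>i\<in>S. Poly_Mapping.lookup A i)"
  unfolding tdeg_def using assms
  by (intro sum.mono_neutral_left) (auto simp: in_keys_iff)

lemma tdeg_add: "tdeg (A + B) = tdeg A + tdeg B"
proof -
  let ?S = "Poly_Mapping.keys A \<union> Poly_Mapping.keys B"
  have "tdeg (A + B) = (\<Sum>i\<in>?S. Poly_Mapping.lookup (A+B) i)"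
    using keys_add[of A B] by (intro tdeg_superset) auto
  also have "\<dots> = (\<Sum>i\<in>?S. Poly_Mapping.lookup A i) + (\<Sum>i\<in>?S. Poly_Mapping.lookup B i)"
    by (simp add: lookup_add sum.distrib)
  also have "\<dots> = tdeg A + tdeg B"
    by (subst (1 2) tdeg_superset[of ?S]) auto
  finally show ?thesis .
qed

lemma tdeg_0[simp]: "tdeg 0 = 0"
  by (simp add: tdeg_def)

lemma tdeg_single[simp]: "tdeg (Poly_Mapping.single i k) = k"
  by (simp add: tdeg_def)

lemma tdeg_eq_0: "tdeg A = 0 \<longleftrightarrow> A = 0"
proof
  assume "tdeg A = 0"
  then have "\<forall>i\<in>Poly_Mapping.keys A. Poly_Mapping.lookup A i = 0"
    unfolding tdeg_def by simp
  then show "A = 0" by (metis in_keys_iff keys_eq_empty equals0I)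
qed simp

lemma is_expo_add: "is_expo n A \<Longrightarrow> is_expo n B \<Longrightarrow> is_expo n (A + B)"
  using keys_add[of A B] by (auto simp: is_expo_def)

lemma is_expo_0[simp]: "is_expo n 0"
  by (simp add: is_expo_def)

lemma is_expo_single: "i \<le> n \<Longrightarrow> is_expo n (Poly_Mapping.single i k)"
  by (simp add: is_expo_def)

lemma is_expo_lookup: "is_expo n A \<Longrightarrow> i > n \<Longrightarrow> Poly_Mapping.lookup A i = 0"
  by (auto simp: is_expo_def in_keys_iff)

lemma is_expo_iff: "is_expo n A \<longleftrightarrow> (\<forall>i>n. Poly_Mapping.lookup A i = 0)"
  unfolding is_expo_def in_keys_iff subset_iff atLeastAtMost_iff
  by (metis not_le zero_le)

lemma expo_eq_iff: "(A::expo) = B \<longleftrightarrow> (\<forall>i. Poly_Mapping.lookup A i = Poly_Mapping.lookup B i)"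
  by (metis poly_mapping_eqI)

lemma tdeg_sum_le: "is_expo n A \<Longrightarrow> tdeg A = (\<Sum>i\<le>n. Poly_Mapping.lookup A i)"
  by (rule tdeg_superset) (auto simp: is_expo_def)

section \<open>Spoly and homogeneity\<close>

lemma Spoly_add: "p \<in> Spoly n \<Longrightarrow> q \<in> Spoly n \<Longrightarrow> p + q \<in> Spoly n"
  using keys_add[of p q] by (auto simp: Spoly_def)

lemma Spoly_0[simp]: "0 \<in> Spoly n"
  by (simp add: Spoly_def)

lemma Spoly_uminus: "p \<in> Spoly n \<Longrightarrow> - p \<in> Spoly n"
  by (auto simp: Spoly_def in_keys_iff)

lemma Spoly_diff: "p \<in> Spoly n \<Longrightarrow> q \<in> Spoly n \<Longrightarrow> p - q \<in> Spoly n"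
  using Spoly_add[OF _ Spoly_uminus] by (metis diff_conv_add_uminus)

lemma Spoly_mult: "p \<in> Spoly n \<Longrightarrow> q \<in> Spoly n \<Longrightarrow> p * q \<in> Spoly n"
  using keys_mult[of p q] by (auto simp: Spoly_def intro!: is_expo_add)

lemma Spoly_sum: "(\<And>x. x \<in> S \<Longrightarrow> f x \<in> Spoly n) \<Longrightarrow> sum f S \<in> Spoly n"
  by (induction S rule: infinite_finite_induct) (auto intro: Spoly_add)

lemma Spoly_one[simp]: "1 \<in> Spoly n"
  by (simp add: Spoly_def)

lemma Spoly_prod: "(\<And>x. x \<in> S \<Longrightarrow> f x \<in> Spoly n) \<Longrightarrow> prod f S \<in> Spoly n"
  by (induction S rule: infinite_finite_induct) (auto intro: Spoly_mult)

lemma Spoly_power: "p \<in> Spoly n \<Longrightarrow> p ^ k \<in> Spoly n"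
  by (induction k) (auto intro: Spoly_mult)

lemma Spoly_const[simp]: "const c \<in> Spoly n"
  by (simp add: Spoly_def const_def)

lemma Spoly_mon: "is_expo n A \<Longrightarrow> mon A \<in> Spoly n"
  by (simp add: Spoly_def)

lemma Spoly_var: "i \<le> n \<Longrightarrow> var i \<in> Spoly n"
  by (simp add: var_def Spoly_mon is_expo_single)

lemma Spoly_lin_form: "lin_form n g i \<in> Spoly n"
  unfolding lin_form_def by (auto intro!: Spoly_sum Spoly_mult Spoly_var)

lemma homog_add: "homog d p \<Longrightarrow> homog d q \<Longrightarrow> homog d (p + q)"
  using keys_add[of p q] by (auto simp: homog_def)

lemma homog_0[simp]: "homog d 0"
  by (simp add: homog_def)

lemma homog_mult: "homog d p \<Longrightarrow> homog e q \<Longrightarrow> homog (d + e) (p * q)"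
  using keys_mult[of p q] by (auto simp: homog_def tdeg_add)

lemma homog_sum: "(\<And>x. x \<in> S \<Longrightarrow> homog d (f x)) \<Longrightarrow> homog d (sum f S)"
  by (induction S rule: infinite_finite_induct) (auto intro: homog_add)

lemma homog_one: "homog 0 1"
  by (simp add: homog_def)

lemma homog_const: "homog 0 (const c)"
  by (simp add: homog_def const_def)

lemma homog_mon: "homog (tdeg A) (mon A)"
  by (simp add: homog_def)

lemma homog_power: "homog d p \<Longrightarrow> homog (k * d) (p ^ k)"
  by (induction k) (auto simp: homog_one dest: homog_mult)

lemma homog_prod: "(\<And>x. x \<in> S \<Longrightarrow> homog (d x) (f x)) \<Longrightarrow> homog (\<Sum>x\<in>S. d x) (prod f S)"
  by (induction S rule: infinite_finite_induct) (auto simp: homog_one intro: homog_mult)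

lemma homog_lin_form: "homog 1 (lin_form n g i)"
  unfolding lin_form_def var_def
  by (rule homog_sum) (metis add_0 homog_const homog_mon homog_mult tdeg_single)

lemma homog_scale: "homog d p \<Longrightarrow> homog d (const c * p)"
  using homog_mult[OF homog_const] by fastforce




definition Mg :: "nat \<Rightarrow> (nat \<Rightarrow> nat \<Rightarrow> 'k::comm_ring_1) \<Rightarrow> expo \<Rightarrow> 'k mpoly" where
  "Mg n g A = (\<Prod>i\<in>Poly_Mapping.keys A. lin_form n g i ^ Poly_Mapping.lookup A i)"

lemma act_Mg: "act n g p = (\<Sum>A\<in>Poly_Mapping.keys p. const (Poly_Mapping.lookup p A) * Mg n g A)"
  by (simp add: act_def Mg_def)

lemma Mg_superset:
  assumes "finite S" "Poly_Mapping.keys A \<subseteq> S"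
  shows "Mg n g A = (\<Prod>i\<in>S. lin_form n g i ^ Poly_Mapping.lookup A i)"
  unfolding Mg_def using assms
  by (intro prod.mono_neutral_left) (auto simp: in_keys_iff)

lemma Mg_add: "Mg n g (A + B) = Mg n g A * Mg n g B"
proof -
  let ?S = "Poly_Mapping.keys A \<union> Poly_Mapping.keys B"
  have "Mg n g (A + B) = (\<Prod>i\<in>?S. lin_form n g i ^ Poly_Mapping.lookup (A+B) i)"
    using keys_add[of A B] by (intro Mg_superset) auto
  also have "\<dots> = (\<Prod>i\<in>?S. lin_form n g i ^ Poly_Mapping.lookup A i) * (\<Prod>i\<in>?S. lin_form n g i ^ Poly_Mapping.lookup B i)"
    by (simp add: lookup_add power_add prod.distrib)
  also have "\<dots> = Mg n g A * Mg n g B"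
    by (subst (1 2) Mg_superset[of ?S]) auto
  finally show ?thesis .
qed

lemma Mg_0[simp]: "Mg n g 0 = 1"
  by (simp add: Mg_def)

lemma act_superset:
  assumes "finite S" "Poly_Mapping.keys p \<subseteq> S"
  shows "act n g p = (\<Sum>A\<in>S. const (Poly_Mapping.lookup p A) * Mg n g A)"
  unfolding act_Mg using assms
  by (intro sum.mono_neutral_left) (auto simp: in_keys_iff)

lemma act_add: "act n g (p + q) = act n g p + act n g q"
proof -
  let ?S = "Poly_Mapping.keys p \<union> Poly_Mapping.keys q"
  have "act n g (p + q) = (\<Sum>A\<in>?S. const (Poly_Mapping.lookup (p+q) A) * Mg n g A)"
    using keys_add[of p q] by (intro act_superset) auto
  also have "\<dots> = (\<Sum>A\<in>?S. const (Poly_Mapping.lookup p A) * Mg n g A) + (\<Sum>A\<in>?S. const (Poly_Mapping.lookup q A) * Mg n g A)"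
    by (simp add: lookup_add const_add distrib_right sum.distrib)
  also have "\<dots> = act n g p + act n g q"
    by (subst (1 2) act_superset[of ?S]) auto
  finally show ?thesis .
qed

lemma act_0[simp]: "act n g 0 = 0"
  by (simp add: act_def)

lemma act_sum: "act n g (sum f S) = (\<Sum>x\<in>S. act n g (f x))"
  by (induction S rule: infinite_finite_induct) (auto simp: act_add)

lemma act_scale: "act n g (const c * p) = const c * act n g p"
proof -
  have "act n g (const c * p) = (\<Sum>A\<in>Poly_Mapping.keys p. const (Poly_Mapping.lookup (const c * p) A) * Mg n g A)"
    by (rule act_superset) (auto simp: in_keys_iff lookup_const_mult)
  also have "\<dots> = const c * act n g p"
    by (simp add: act_Mg lookup_const_mult sum_distrib_left const_mult[symmetric] mult.assoc)
  finally show ?thesis .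
qed

lemma act_single: "act n g (const a * mon A) = const a * Mg n g A"
  by (simp add: act_Mg const_mon lookup_single)

lemma act_mon: "act n g (mon A) = Mg n g A"
  using act_single[of n g 1 A] by simp

lemma act_uminus: "act n g (- p) = - act n g p"
  using act_add[of n g p "-p"] by (simp add: eq_neg_iff_add_eq_0 add.commute)

lemma act_diff: "act n g (p - q) = act n g p - act n g q"
  by (metis act_add act_uminus diff_conv_add_uminus)

lemma act_mult: "act n g (p * q) = act n g p * act n g q"
proof -
  let ?P = "Poly_Mapping.keys p" and ?Q = "Poly_Mapping.keys q"
  have p: "p = (\<Sum>A\<in>?P. const (Poly_Mapping.lookup p A) * mon A)"
    by (rule mpoly_repr) auto
  have q: "q = (\<Sum>B\<in>?Q. const (Poly_Mapping.lookup q B) * mon B)"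
    by (rule mpoly_repr) auto
  have pq: "p * q = (\<Sum>A\<in>?P. \<Sum>B\<in>?Q. const (Poly_Mapping.lookup p A * Poly_Mapping.lookup q B) * mon (A + B))"
    apply (subst p, subst q)
    apply (simp add: sum_product)
    apply (intro sum.cong refl)
    apply (simp add: const_mult[symmetric] mon_mult[symmetric] ac_simps)
    done
  have "act n g (p * q) = (\<Sum>A\<in>?P. \<Sum>B\<in>?Q. const (Poly_Mapping.lookup p A * Poly_Mapping.lookup q B) * Mg n g (A + B))"
    by (subst pq) (simp add: act_sum act_single)
  also have "\<dots> = (\<Sum>A\<in>?P. const (Poly_Mapping.lookup p A) * Mg n g A) * (\<Sum>B\<in>?Q. const (Poly_Mapping.lookup q B) * Mg n g B)"
    by (simp add: sum_product Mg_add const_mult[symmetric] ac_simps)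
  finally show ?thesis by (simp add: act_Mg)
qed

lemma act_one[simp]: "act n g 1 = 1"
  using act_mon[of n g 0] by simp

lemma act_const: "act n g (const c) = const c"
  using act_single[of n g c 0] by simp

lemma act_prod: "act n g (prod f S) = (\<Prod>x\<in>S. act n g (f x))"
  by (induction S rule: infinite_finite_induct) (auto simp: act_mult)

lemma act_power: "act n g (p ^ k) = act n g p ^ k"
  by (induction k) (auto simp: act_mult)

lemma keys_single_expo: "Poly_Mapping.keys (Poly_Mapping.single (i::nat) (1::nat)) = {i}"
  by simp

lemma Mg_var: "Mg n g (Poly_Mapping.single i 1) = lin_form n g i"
  unfolding Mg_def keys_single_expo by simp

lemma act_var: "act n g (var i) = lin_form n g i"
  unfolding var_def act_mon by (rule Mg_var)

definition mmul :: "nat \<Rightarrow> (nat \<Rightarrow> nat \<Rightarrow> 'k::comm_ring_1) \<Rightarrow> (nat \<Rightarrow> nat \<Rightarrow> 'k) \<Rightarrow> nat \<Rightarrow> nat \<Rightarrow> 'k" where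
  "mmul n g h i j = (\<Sum>k\<le>n. g i k * h k j)"

lemma act_lin_form: "act n g (lin_form n h i) = lin_form n (mmul n g h) i"
proof -
  have "act n g (lin_form n h i) = (\<Sum>j\<le>n. const (h j i) * (\<Sum>k\<le>n. const (g k j) * var k))"
    by (simp add: lin_form_def act_sum act_scale act_var)
  also have "\<dots> = (\<Sum>j\<le>n. \<Sum>k\<le>n. const (g k j * h j i) * var k)"
    by (simp add: sum_distrib_left const_mult[symmetric] ac_simps)
  also have "\<dots> = (\<Sum>k\<le>n. \<Sum>j\<le>n. const (g k j * h j i) * var k)"
    by (rule sum.swap)
  also have "\<dots> = lin_form n (mmul n g h) i"
    by (simp add: lin_form_def mmul_def const_sum sum_distrib_right)
  finally show ?thesis .
qed

lemma act_Mg_comp: "act n g (Mg n h A) = Mg n (mmul n g h) A"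
  by (simp add: Mg_def act_prod act_power act_lin_form)

lemma act_comp: "act n g (act n h p) = act n (mmul n g h) p"
  by (subst (2) act_Mg) (simp add: act_Mg[of n h] act_sum act_scale act_Mg_comp)

lemma var_power: "var i ^ k = (mon (Poly_Mapping.single i k) :: 'k::comm_ring_1 mpoly)"
  by (induction k) (auto simp: var_def mon_mult single_add[symmetric] ac_simps)

lemma mon_sum: "(\<Prod>x\<in>S. mon (f x)) = (mon (\<Sum>x\<in>S. f x) :: 'k::comm_ring_1 mpoly)"
  by (induction S rule: infinite_finite_induct) (auto simp: mon_mult)

lemma lin_form_cong:
  assumes "\<And>j. j \<le> n \<Longrightarrow> g j i = g' j i"
  shows "lin_form n g i = lin_form n g' i"
  unfolding lin_form_def using assms by simp

lemma Mg_cong: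
  assumes "is_expo n A" "\<And>i j. i \<le> n \<Longrightarrow> j \<le> n \<Longrightarrow> g i j = g' i j"
  shows "Mg n g A = Mg n g' A"
  unfolding Mg_def using assms
  by (intro prod.cong refl arg_cong2[where f="(^)"] lin_form_cong) (auto simp: is_expo_def)

lemma act_cong:
  assumes "p \<in> Spoly n" "\<And>i j. i \<le> n \<Longrightarrow> j \<le> n \<Longrightarrow> g i j = g' i j"
  shows "act n g p = act n g' p"
  unfolding act_Mg using assms
  by (intro sum.cong refl arg_cong2[where f="(*)"] Mg_cong) (auto simp: Spoly_def)

definition idm :: "nat \<Rightarrow> nat \<Rightarrow> 'k::comm_ring_1" where
  "idm i j = (if i = j then 1 else 0)"

lemma lin_form_idm: "i \<le> n \<Longrightarrow> lin_form n idm i = var i"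
proof -
  assume "i \<le> n"
  have "lin_form n idm i = (\<Sum>j\<le>n. if j = i then var i else 0)"
    unfolding lin_form_def idm_def by (intro sum.cong refl) auto
  then show ?thesis using \<open>i \<le> n\<close> by simp
qed

lemma Mg_idm: "is_expo n A \<Longrightarrow> Mg n idm A = mon A"
proof -
  assume A: "is_expo n A"
  have "Mg n idm A = (\<Prod>i\<in>Poly_Mapping.keys A. var i ^ Poly_Mapping.lookup A i)"
    unfolding Mg_def using A by (intro prod.cong refl) (auto simp: lin_form_idm is_expo_def)
  also have "\<dots> = mon (\<Sum>i\<in>Poly_Mapping.keys A. Poly_Mapping.single i (Poly_Mapping.lookup A i))"
    by (simp add: var_power mon_sum)
  also have "\<dots> = mon A"
    using pm_repr[of "Poly_Mapping.keys A" A] by simp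
  finally show ?thesis .
qed

lemma act_idm: "p \<in> Spoly n \<Longrightarrow> act n idm p = p"
proof -
  assume p: "p \<in> Spoly n"
  have "act n idm p = (\<Sum>A\<in>Poly_Mapping.keys p. const (Poly_Mapping.lookup p A) * mon A)"
    unfolding act_Mg using p by (intro sum.cong refl) (auto simp: Mg_idm Spoly_def)
  also have "\<dots> = p" by (rule mpoly_repr[symmetric]) auto
  finally show ?thesis .
qed

lemma act_inverse:
  assumes "p \<in> Spoly n" "\<And>i j. i \<le> n \<Longrightarrow> j \<le> n \<Longrightarrow> mmul n g h i j = idm i j"
  shows "act n g (act n h p) = p"
  using act_cong[OF assms] act_idm[OF assms(1)] by (simp add: act_comp)

lemma Spoly_Mg: "Mg n g A \<in> Spoly n"
  by (simp add: Mg_def Spoly_prod Spoly_power Spoly_lin_form)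

lemma Spoly_act: "act n g p \<in> Spoly n"
  by (simp add: act_Mg Spoly_sum Spoly_mult Spoly_Mg)

lemma homog_Mg: "homog (tdeg A) (Mg n g A)"
proof -
  have "homog (\<Sum>i\<in>Poly_Mapping.keys A. Poly_Mapping.lookup A i * 1) (Mg n g A)"
    unfolding Mg_def by (intro homog_prod homog_power homog_lin_form)
  then show ?thesis by (simp add: tdeg_def)
qed

lemma keys_Mg_Pmn: "Poly_Mapping.keys (Mg n g A) \<subseteq> Pmn (tdeg A) n"
  using homog_Mg[of A n g] Spoly_Mg[of n g A] by (auto simp: Pmn_def homog_def Spoly_def)

lemma keys_act_Pmn:
  assumes "Poly_Mapping.keys p \<subseteq> Pmn d n"
  shows "Poly_Mapping.keys (act n g p) \<subseteq> Pmn d n"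
proof -
  have "homog d (act n g p)"
    unfolding act_Mg using assms homog_Mg
    by (intro homog_sum homog_scale) (force simp: Pmn_def)
  then show ?thesis using Spoly_act[of n g p] by (auto simp: Pmn_def homog_def Spoly_def)
qed




lemma finite_Pmn: "finite (Pmn m n)"
proof -
  let ?f = "\<lambda>A::expo. map (Poly_Mapping.lookup A) [0..<Suc n]"
  have inj: "inj_on ?f (Pmn m n)"
  proof (rule inj_onI)
    fix A B assume A: "A \<in> Pmn m n" and B: "B \<in> Pmn m n" and eq: "?f A = ?f B"
    show "A = B"
    proof (rule poly_mapping_eqI)
      fix i
      show "Poly_Mapping.lookup A i = Poly_Mapping.lookup B i"
      proof (cases "i \<le> n")
        case True
        from eq have "\<forall>j\<in>set [0..<Suc n]. Poly_Mapping.lookup A j = Poly_Mapping.lookup B j"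
          unfolding map_eq_conv .
        then show ?thesis using True by (simp del: upt_Suc)
      next
        case False then show ?thesis using A B by (auto simp: Pmn_def is_expo_lookup)
      qed
    qed
  qed
  have sub: "?f ` Pmn m n \<subseteq> {xs. set xs \<subseteq> {0..m} \<and> length xs = Suc n}"
  proof
    fix x assume "x \<in> ?f ` Pmn m n"
    then obtain A where A: "A \<in> Pmn m n" and x: "x = ?f A" by auto
    have "Poly_Mapping.lookup A i \<le> m" for i
    proof (cases "i \<in> Poly_Mapping.keys A")
      case True
      have "Poly_Mapping.lookup A i \<le> tdeg A"
        unfolding tdeg_def using True by (intro member_le_sum) auto
      then show ?thesis using A by (simp add: Pmn_def)
    qed (simp add: in_keys_iff)
    then show "x \<in> {xs. set xs \<subseteq> {0..m} \<and> length xs = Suc n}" using x by auto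
  qed
  have "finite (?f ` Pmn m n)"
    by (rule finite_subset[OF sub]) (simp add: finite_lists_length_eq)
  then show ?thesis using finite_imageD[OF _ inj] by blast
qed

lemma keys_diff_sub: "Poly_Mapping.keys ((p::'k::comm_ring_1 mpoly) - q) \<subseteq> Poly_Mapping.keys p \<union> Poly_Mapping.keys q"
  by (auto simp: in_keys_iff lookup_minus)

locale bsetup =
  fixes n m :: nat
    and I :: "'k::field_char_0 mpoly set"
    and c :: "expo \<Rightarrow> expo \<Rightarrow> 'k"
  assumes hom: "homog_ideal n I"
    and bfix: "borel_fixed n I"
    and tangent: "hilb_tangent n m I c"
begin

abbreviation "F \<equiv> Fset n m I"
abbreviation "R \<equiv> Rset n m I"
abbreviation "J \<equiv> def_ideal n m I c"

definition sigma :: "expo \<Rightarrow> 'k mpoly" where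
  "sigma A = (\<Sum>B\<in>R. const (c A B) * mon B)"

definition phi :: "'k mpoly \<Rightarrow> 'k mpoly" where
  "phi p = (\<Sum>A\<in>F. const (Poly_Mapping.lookup p A) * sigma A)"

definition piR :: "'k mpoly \<Rightarrow> 'k mpoly" where
  "piR p = (\<Sum>B\<in>R. const (Poly_Mapping.lookup p B) * mon B)"

lemma finite_F: "finite F"
  by (rule finite_subset[OF _ finite_Pmn[of m n]]) (auto simp: Fset_def)

lemma finite_R: "finite R"
  by (rule finite_subset[OF _ finite_Pmn[of m n]]) (auto simp: Rset_def)

lemma F_Pmn: "A \<in> F \<Longrightarrow> A \<in> Pmn m n"
  by (simp add: Fset_def)

lemma R_Pmn: "A \<in> R \<Longrightarrow> A \<in> Pmn m n"
  by (simp add: Rset_def)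

lemma FR_disj: "A \<in> F \<Longrightarrow> A \<in> R \<Longrightarrow> False"
  by (simp add: Fset_def Rset_def)

lemma Pmn_FR: "A \<in> Pmn m n \<Longrightarrow> A \<in> F \<or> A \<in> R"
  by (auto simp: Fset_def Rset_def)

lemma c_nz: "c A B \<noteq> 0 \<Longrightarrow> A \<in> F \<and> B \<in> R"
  using tangent by (auto simp: hilb_tangent_def grass_tangent_def)

lemma flat: "eps_flat n J"
  using tangent by (simp add: hilb_tangent_def)

lemma def_gen_eq: "def_gen n m I c A = (mon A, sigma A)"
  by (simp add: def_gen_def sigma_def)

lemma lookup_sigma: "Poly_Mapping.lookup (sigma A) B = c A B"
  unfolding sigma_def using finite_R c_nz by (auto simp: lookup_sum_const_mon)

lemma keys_sigma: "Poly_Mapping.keys (sigma A) \<subseteq> R"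
  unfolding sigma_def using finite_R by (rule keys_sum_const_mon)

lemma Spoly_Pmn: "Poly_Mapping.keys p \<subseteq> Pmn d n \<Longrightarrow> p \<in> Spoly n"
  by (auto simp: Spoly_def Pmn_def)

lemma Spoly_sigma: "sigma A \<in> Spoly n"
  using keys_sigma by (intro Spoly_Pmn[of _ m]) (auto dest: R_Pmn)

lemma lookup_piR: "Poly_Mapping.lookup (piR p) B = (if B \<in> R then Poly_Mapping.lookup p B else 0)"
  unfolding piR_def using finite_R by (simp add: lookup_sum_const_mon)

lemma keys_piR: "Poly_Mapping.keys (piR p) \<subseteq> R"
  unfolding piR_def using finite_R by (rule keys_sum_const_mon)

lemma lookup_phi: "Poly_Mapping.lookup (phi p) C = (\<Sum>A\<in>F. Poly_Mapping.lookup p A * c A C)"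
  unfolding phi_def by (simp add: lookup_sum lookup_const_mult lookup_sigma)

lemma keys_phi: "Poly_Mapping.keys (phi p) \<subseteq> R"
proof
  fix C assume "C \<in> Poly_Mapping.keys (phi p)"
  then have "(\<Sum>A\<in>F. Poly_Mapping.lookup p A * c A C) \<noteq> 0" by (simp add: in_keys_iff lookup_phi)
  then obtain A where "c A C \<noteq> 0" by (metis (no_types, lifting) mult_zero_right sum.neutral)
  then show "C \<in> R" using c_nz by blast
qed

lemma Spoly_phi: "phi p \<in> Spoly n"
  using keys_phi by (intro Spoly_Pmn[of _ m]) (auto dest: R_Pmn)

lemma phi_add: "phi (p + q) = phi p + phi q"
  by (rule poly_mapping_eqI) (simp add: lookup_add lookup_phi sum.distrib distrib_right)

lemma phi_scale: "phi (const t * p) = const t * phi p"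
  by (rule poly_mapping_eqI) (simp add: lookup_const_mult lookup_phi sum_distrib_left mult.assoc)

lemma phi_diff: "phi (p - q) = phi p - phi q"
  by (rule poly_mapping_eqI) (simp add: lookup_minus lookup_phi sum_subtractf left_diff_distrib)

lemma phi_0[simp]: "phi 0 = 0"
  by (simp add: phi_def)

lemma phi_sum: "phi (sum f S) = (\<Sum>x\<in>S. phi (f x))"
  by (induction S rule: infinite_finite_induct) (auto simp: phi_add)

lemma piR_add: "piR (p + q) = piR p + piR q"
  by (rule poly_mapping_eqI) (simp add: lookup_add lookup_piR)

lemma piR_diff: "piR (p - q) = piR p - piR q"
  by (rule poly_mapping_eqI) (simp add: lookup_minus lookup_piR)

lemma piR_scale: "piR (const t * p) = const t * piR p"
  by (rule poly_mapping_eqI) (simp add: lookup_const_mult lookup_piR)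

lemma piR_0[simp]: "piR 0 = 0"
  by (simp add: piR_def)

lemma piR_sum: "piR (sum f S) = (\<Sum>x\<in>S. piR (f x))"
  by (induction S rule: infinite_finite_induct) (auto simp: piR_add)

lemma piR_id: "Poly_Mapping.keys p \<subseteq> R \<Longrightarrow> piR p = p"
  by (rule poly_mapping_eqI) (auto simp: lookup_piR in_keys_iff)

lemma piR_F: "Poly_Mapping.keys p \<subseteq> F \<Longrightarrow> piR p = 0"
  by (rule poly_mapping_eqI) (auto simp: lookup_piR in_keys_iff dest: FR_disj)

lemma phi_mon: "A \<in> F \<Longrightarrow> phi (mon A) = sigma A"
proof -
  assume A: "A \<in> F"
  have "phi (mon A) = (\<Sum>x\<in>F. if x = A then sigma A else 0)"
    unfolding phi_def by (intro sum.cong) (auto simp: lookup_mon)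
  then show ?thesis using A finite_F by simp
qed

lemma J_iff: "(f0, f1) \<in> J \<longleftrightarrow> f0 \<in> Spoly n \<and> f1 \<in> Spoly n \<and>
     (\<exists>a b. (\<forall>x\<in>F. a x \<in> Spoly n \<and> b x \<in> Spoly n) \<and>
        f0 = (\<Sum>x\<in>F. a x * mon x) \<and>
        f1 = (\<Sum>x\<in>F. a x * sigma x + b x * mon x))"
  by (simp add: def_ideal_def eps_ideal_def def_gen_eq)

lemma keys_gen_ideal:
  fixes a :: "expo \<Rightarrow> 'k mpoly"
  assumes "\<forall>x\<in>F. a x \<in> Spoly n" "Poly_Mapping.keys (\<Sum>x\<in>F. a x * mon x) \<subseteq> Pmn m n"
  shows "Poly_Mapping.keys (\<Sum>x\<in>F. a x * mon x) \<subseteq> F"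
proof
  fix C assume C: "C \<in> Poly_Mapping.keys (\<Sum>x\<in>F. a x * mon x)"
  then obtain x where x: "x \<in> F" "C \<in> Poly_Mapping.keys (a x * mon x)"
    using keys_sum[of "\<lambda>x. a x * mon x" F] by (auto simp del: keys_mon)
  then have "C \<in> {a' + b | a' b. a' \<in> Poly_Mapping.keys (a x) \<and> b \<in> Poly_Mapping.keys (mon x :: 'k mpoly)}"
    by (intro subsetD[OF keys_mult]) auto
  then obtain D where "C = D + x" by auto
  moreover have "tdeg C = m" using C assms(2) by (auto simp: Pmn_def)
  moreover have "tdeg x = m" using x(1) by (simp add: Fset_def Pmn_def)
  ultimately have "D = 0" by (simp add: tdeg_add tdeg_eq_0)
  then show "C \<in> F" using \<open>C = D + x\<close> x(1) by simp
qed

lemma J_keys: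
  assumes "(f0, f1) \<in> J" "Poly_Mapping.keys f0 \<subseteq> Pmn m n"
  shows "Poly_Mapping.keys f0 \<subseteq> F"
  using assms keys_gen_ideal unfolding J_iff by blast

lemma J_sub:
  assumes "(f0, f1) \<in> J" "(g0, g1) \<in> J"
  shows "(f0 - g0, f1 - g1) \<in> J"
proof -
  obtain a b where ab: "\<forall>x\<in>F. a x \<in> Spoly n \<and> b x \<in> Spoly n" "f0 = (\<Sum>x\<in>F. a x * mon x)"
    "f1 = (\<Sum>x\<in>F. a x * sigma x + b x * mon x)" using assms(1) unfolding J_iff by blast
  obtain a' b' where ab': "\<forall>x\<in>F. a' x \<in> Spoly n \<and> b' x \<in> Spoly n" "g0 = (\<Sum>x\<in>F. a' x * mon x)"
    "g1 = (\<Sum>x\<in>F. a' x * sigma x + b' x * mon x)" using assms(2) unfolding J_iff by blast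
  have S: "f0 - g0 \<in> Spoly n" "f1 - g1 \<in> Spoly n" using assms unfolding J_iff by (auto intro: Spoly_diff)
  have 1: "\<forall>x\<in>F. a x - a' x \<in> Spoly n \<and> b x - b' x \<in> Spoly n" using ab ab' by (auto intro: Spoly_diff)
  have 2: "f0 - g0 = (\<Sum>x\<in>F. (a x - a' x) * mon x)"
    by (simp add: ab ab' left_diff_distrib sum_subtractf)
  have 3: "f1 - g1 = (\<Sum>x\<in>F. (a x - a' x) * sigma x + (b x - b' x) * mon x)"
    by (simp add: ab ab' left_diff_distrib sum_subtractf sum.distrib algebra_simps)
  have "\<exists>a b. (\<forall>x\<in>F. a x \<in> Spoly n \<and> b x \<in> Spoly n) \<and>
        f0 - g0 = (\<Sum>x\<in>F. a x * mon x) \<and>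
        f1 - g1 = (\<Sum>x\<in>F. a x * sigma x + b x * mon x)"
    apply (rule exI[where x="\<lambda>x. a x - a' x"])
    apply (rule exI[where x="\<lambda>x. b x - b' x"])
    using 1 2 3 by simp
  then show ?thesis unfolding J_iff using S by blast
qed

lemma J_phi:
  assumes "f0 \<in> Spoly n" "Poly_Mapping.keys f0 \<subseteq> F"
  shows "(f0, phi f0) \<in> J"
proof -
  have 1: "\<forall>x\<in>F. const (Poly_Mapping.lookup f0 x) \<in> Spoly n \<and> (0::'k mpoly) \<in> Spoly n" by simp
  have 2: "f0 = (\<Sum>x\<in>F. const (Poly_Mapping.lookup f0 x) * mon x)"
    by (rule mpoly_repr) (use assms finite_F in auto)
  have 3: "phi f0 = (\<Sum>x\<in>F. const (Poly_Mapping.lookup f0 x) * sigma x + 0 * mon x)"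
    by (simp add: phi_def)
  have "\<exists>a b. (\<forall>x\<in>F. a x \<in> Spoly n \<and> b x \<in> Spoly n) \<and>
        f0 = (\<Sum>x\<in>F. a x * mon x) \<and>
        phi f0 = (\<Sum>x\<in>F. a x * sigma x + b x * mon x)"
    apply (rule exI[where x="\<lambda>x. const (Poly_Mapping.lookup f0 x)"])
    apply (rule exI[where x="\<lambda>x. 0"])
    using 1 2 3 by simp
  then show ?thesis unfolding J_iff using assms(1) Spoly_phi by blast
qed

lemma J_char:
  assumes "(f0, f1) \<in> J" "Poly_Mapping.keys f0 \<subseteq> Pmn m n" "Poly_Mapping.keys f1 \<subseteq> Pmn m n"
  shows "Poly_Mapping.keys f0 \<subseteq> F \<and> piR f1 = phi f0"
proof
  show kf: "Poly_Mapping.keys f0 \<subseteq> F" by (rule J_keys[OF assms(1,2)])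
  have f0S: "f0 \<in> Spoly n" using assms(1) unfolding J_iff by blast
  have f1S: "f1 \<in> Spoly n" using assms(1) unfolding J_iff by blast
  have "(f0 - f0, f1 - phi f0) \<in> J" by (rule J_sub[OF assms(1) J_phi[OF f0S kf]])
  then have "(0, f1 - phi f0) \<in> J" by simp
  moreover have "f1 - phi f0 \<in> Spoly n" using f1S Spoly_phi by (rule Spoly_diff)
  ultimately obtain h where h: "(f1 - phi f0, h) \<in> J"
    using flat unfolding eps_flat_def by blast
  have "Poly_Mapping.keys (f1 - phi f0) \<subseteq> Pmn m n"
    using keys_diff_sub[of f1 "phi f0"] assms(3) keys_phi[of f0] R_Pmn by blast
  then have "Poly_Mapping.keys (f1 - phi f0) \<subseteq> F" by (rule J_keys[OF h])
  then have "piR (f1 - phi f0) = 0" by (rule piR_F)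
  then show "piR f1 = phi f0" using piR_id[OF keys_phi[of f0]] by (simp add: piR_diff)
qed

end




definition shj :: "nat \<Rightarrow> nat \<Rightarrow> nat \<Rightarrow> expo \<Rightarrow> expo" where
  "shj j i k A = A + Poly_Mapping.single j k - Poly_Mapping.single i k"

lemma lookup_shj:
  assumes "j \<noteq> i"
  shows "Poly_Mapping.lookup (shj j i k A) l =
    (if l = i then Poly_Mapping.lookup A i - k else if l = j then Poly_Mapping.lookup A j + k else Poly_Mapping.lookup A l)"
  using assms by (auto simp: shj_def lookup_minus lookup_add lookup_single when_def)

lemma shj_0[simp]: "shj j i 0 A = A"
  by (simp add: shj_def)

lemma shj_shj: "j \<noteq> i \<Longrightarrow> shj j i k (shj j i l A) = shj j i (l + k) A"
  by (auto simp: expo_eq_iff lookup_shj)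

lemma addDelta_shj: "addDelta A i = shj (i - 1) i 1 A"
  by (simp add: addDelta_def shj_def)

lemma shj_inj:
  assumes "j \<noteq> i" "k \<le> Poly_Mapping.lookup A i" "k' \<le> Poly_Mapping.lookup A i" "shj j i k A = shj j i k' A"
  shows "k = k'"
proof -
  have "Poly_Mapping.lookup (shj j i k A) i = Poly_Mapping.lookup (shj j i k' A) i" using assms(4) by simp
  then show ?thesis using assms(1-3) by (simp add: lookup_shj)
qed

lemma tdeg_shj:
  assumes "j \<noteq> i" "k \<le> Poly_Mapping.lookup A i"
  shows "tdeg (shj j i k A) = tdeg A"
proof -
  let ?S = "Poly_Mapping.keys A \<union> {i, j}"
  have "tdeg (shj j i k A) = (\<Sum>l\<in>?S. Poly_Mapping.lookup (shj j i k A) l)"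
    by (rule tdeg_superset) (use assms in \<open>auto simp: in_keys_iff lookup_shj split: if_splits\<close>)
  also have "\<dots> = (\<Sum>l\<in>?S. Poly_Mapping.lookup A l)"
  proof -
    have f: "finite (?S - {i, j})" by simp
    have "(\<Sum>l\<in>?S. Poly_Mapping.lookup (shj j i k A) l) = (\<Sum>l\<in>{i,j}. Poly_Mapping.lookup (shj j i k A) l) + (\<Sum>l\<in>?S - {i,j}. Poly_Mapping.lookup (shj j i k A) l)"
      by (metis (no_types, lifting) Un_upper2 add.commute finite.emptyI finite.insertI finite_Un finite_keys sum.subset_diff)
    also have "\<dots> = (\<Sum>l\<in>{i,j}. Poly_Mapping.lookup A l) + (\<Sum>l\<in>?S - {i,j}. Poly_Mapping.lookup A l)"
      using assms by (simp add: lookup_shj)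
    also have "\<dots> = (\<Sum>l\<in>?S. Poly_Mapping.lookup A l)"
      by (metis (no_types, lifting) Un_upper2 add.commute finite.emptyI finite.insertI finite_Un finite_keys sum.subset_diff)
    finally show ?thesis .
  qed
  also have "\<dots> = tdeg A" by (rule tdeg_superset[symmetric]) auto
  finally show ?thesis .
qed

lemma is_expo_shj:
  assumes "j \<le> n" "i \<le> n" "j \<noteq> i" "is_expo n A"
  shows "is_expo n (shj j i k A)"
  using assms by (auto simp: is_expo_iff lookup_shj)

lemma Pmn_shj:
  assumes "j \<le> n" "i \<le> n" "j \<noteq> i" "A \<in> Pmn m n" "k \<le> Poly_Mapping.lookup A i"
  shows "shj j i k A \<in> Pmn m n"
  using assms is_expo_shj tdeg_shj by (auto simp: Pmn_def)

lemma shj_back: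
  assumes "j \<noteq> i"
  shows "(k \<le> Poly_Mapping.lookup B i \<and> shj j i k B = C) \<longleftrightarrow>
         (k \<le> Poly_Mapping.lookup C j \<and> B = shj i j k C)"
proof
  assume a: "k \<le> Poly_Mapping.lookup B i \<and> shj j i k B = C"
  have l: "Poly_Mapping.lookup C l = Poly_Mapping.lookup (shj j i k B) l" for l using a by simp
  have "B = shj i j k C"
  proof (rule poly_mapping_eqI)
    fix l show "Poly_Mapping.lookup B l = Poly_Mapping.lookup (shj i j k C) l"
      using l[of l] l[of i] l[of j] a assms by (auto simp: lookup_shj)
  qed
  then show "k \<le> Poly_Mapping.lookup C j \<and> B = shj i j k C"
    using l[of j] assms by (simp add: lookup_shj)
next
  assume a: "k \<le> Poly_Mapping.lookup C j \<and> B = shj i j k C"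
  have l: "Poly_Mapping.lookup B l = Poly_Mapping.lookup (shj i j k C) l" for l using a by simp
  have "shj j i k B = C"
  proof (rule poly_mapping_eqI)
    fix l show "Poly_Mapping.lookup (shj j i k B) l = Poly_Mapping.lookup C l"
      using l[of l] l[of i] l[of j] a assms by (auto simp: lookup_shj)
  qed
  then show "k \<le> Poly_Mapping.lookup B i \<and> shj j i k B = C"
    using l[of i] assms by (simp add: lookup_shj)
qed

section \<open>Special matrices\<close>

definition dg :: "(nat \<Rightarrow> 'k) \<Rightarrow> nat \<Rightarrow> nat \<Rightarrow> 'k::comm_ring_1" where
  "dg d i j = (if i = j then d i else 0)"

definition el :: "nat \<Rightarrow> nat \<Rightarrow> 'k \<Rightarrow> nat \<Rightarrow> nat \<Rightarrow> 'k::comm_ring_1" where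
  "el j i s a b = (if a = b then 1 else if a = j \<and> b = i then s else 0)"

definition dprod :: "(nat \<Rightarrow> 'k::comm_ring_1) \<Rightarrow> expo \<Rightarrow> 'k" where
  "dprod d A = (\<Prod>l\<in>Poly_Mapping.keys A. d l ^ Poly_Mapping.lookup A l)"

lemma dprod_superset:
  assumes "finite S" "Poly_Mapping.keys A \<subseteq> S"
  shows "dprod d A = (\<Prod>l\<in>S. d l ^ Poly_Mapping.lookup A l)"
  unfolding dprod_def using assms by (intro prod.mono_neutral_left) (auto simp: in_keys_iff)

lemma dprod_add: "dprod d (A + B) = dprod d A * dprod d B"
proof -
  let ?S = "Poly_Mapping.keys A \<union> Poly_Mapping.keys B"
  have "dprod d (A + B) = (\<Prod>i\<in>?S. d i ^ Poly_Mapping.lookup (A+B) i)"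
    using keys_add[of A B] by (intro dprod_superset) auto
  also have "\<dots> = (\<Prod>i\<in>?S. d i ^ Poly_Mapping.lookup A i) * (\<Prod>i\<in>?S. d i ^ Poly_Mapping.lookup B i)"
    by (simp add: lookup_add power_add prod.distrib)
  also have "\<dots> = dprod d A * dprod d B"
    by (subst (1 2) dprod_superset[of ?S]) auto
  finally show ?thesis .
qed

lemma lin_form_dg: "i \<le> n \<Longrightarrow> lin_form n (dg d) i = const (d i) * var i"
proof -
  assume "i \<le> n"
  have "lin_form n (dg d) i = (\<Sum>j\<le>n. if j = i then const (d i) * var i else 0)"
    unfolding lin_form_def dg_def by (intro sum.cong refl) auto
  then show ?thesis using \<open>i \<le> n\<close> by simp
qed

lemma Mg_dg: "is_expo n A \<Longrightarrow> Mg n (dg d) A = const (dprod d A) * mon A"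
proof -
  assume A: "is_expo n A"
  have "Mg n (dg d) A = (\<Prod>i\<in>Poly_Mapping.keys A. (const (d i) * var i) ^ Poly_Mapping.lookup A i)"
    unfolding Mg_def using A by (intro prod.cong refl) (auto simp: lin_form_dg is_expo_def)
  also have "\<dots> = const (dprod d A) * (\<Prod>i\<in>Poly_Mapping.keys A. var i ^ Poly_Mapping.lookup A i)"
    by (simp add: power_mult_distrib prod.distrib dprod_def const_prod const_power)
  also have "(\<Prod>i\<in>Poly_Mapping.keys A. var i ^ Poly_Mapping.lookup A i) = Mg n idm A"
    unfolding Mg_def using A by (intro prod.cong refl) (auto simp: lin_form_idm is_expo_def)
  also have "Mg n idm A = mon A" by (rule Mg_idm[OF A])
  finally show ?thesis .
qed

lemma act_dg_mon: "is_expo n A \<Longrightarrow> act n (dg d) (mon A) = const (dprod d A) * mon A"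
  by (simp add: act_mon Mg_dg)

lemma lin_form_el_other:
  assumes "l \<noteq> i" "l \<le> n"
  shows "lin_form n (el j i s) l = var l"
proof -
  have "lin_form n (el j i s) l = (\<Sum>j'\<le>n. if j' = l then var l else 0)"
    unfolding lin_form_def el_def using assms by (intro sum.cong refl) auto
  then show ?thesis using assms by simp
qed

lemma lin_form_el:
  assumes "j \<noteq> i" "i \<le> n" "j \<le> n"
  shows "lin_form n (el j i s) i = var i + const s * var j"
proof -
  have "lin_form n (el j i s) i = (\<Sum>j'\<le>n. (if j' = i then var i else 0) + (if j' = j then const s * var j else 0))"
    unfolding lin_form_def el_def using assms by (intro sum.cong refl) auto
  then show ?thesis using assms by (simp add: sum.distrib)
qed

lemma Mg_single: "Mg n g (Poly_Mapping.single i k) = lin_form n g i ^ k"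
  by (cases "k = 0") (auto simp: Mg_def)

lemma of_nat_mpoly: "(of_nat x :: 'k::comm_ring_1 mpoly) = const (of_nat x)"
  by (simp add: const_def)

lemma act_el_mon:
  assumes "j \<noteq> i" "i \<le> n" "j \<le> n" "is_expo n A"
  shows "act n (el j i s) (mon A) =
    (\<Sum>k\<le>Poly_Mapping.lookup A i. const (of_nat (Poly_Mapping.lookup A i choose k) * s ^ k) * mon (shj j i k A))"
proof -
  let ?a = "Poly_Mapping.lookup A i"
  define A' where "A' = A - Poly_Mapping.single i ?a"
  have AA': "A = A' + Poly_Mapping.single i ?a"
    by (auto simp: expo_eq_iff A'_def lookup_add lookup_minus lookup_single when_def)
  have A'i: "Poly_Mapping.lookup A' i = 0" by (simp add: A'_def lookup_minus)
  have A'e: "is_expo n A'" using assms(4) by (auto simp: is_expo_iff A'_def lookup_minus)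
  have MA': "Mg n (el j i s) A' = mon A'"
  proof -
    have "Mg n (el j i s) A' = Mg n idm A'"
      unfolding Mg_def
    proof (intro prod.cong refl arg_cong2[where f="(^)"])
      fix x assume x: "x \<in> Poly_Mapping.keys A'"
      then have "x \<noteq> i" using A'i by (auto simp: in_keys_iff)
      moreover have "x \<le> n" using x A'e unfolding is_expo_def by auto
      ultimately show "lin_form n (el j i s) x = lin_form n idm x"
        by (simp add: lin_form_el_other lin_form_idm)
    qed
    then show ?thesis using Mg_idm[OF A'e] by simp
  qed
  have "act n (el j i s) (mon A) = mon A' * (var i + const s * var j) ^ ?a"
    unfolding act_mon by (subst AA') (simp add: Mg_add MA' Mg_single lin_form_el assms)
  also have "\<dots> = mon A' * (\<Sum>k\<le>?a. of_nat (?a choose k) * (const s * var j) ^ k * var i ^ (?a - k))"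
    by (subst add.commute) (simp add: binomial_ring)
  also have "\<dots> = (\<Sum>k\<le>?a. const (of_nat (?a choose k) * s ^ k) * mon (A' + Poly_Mapping.single j k + Poly_Mapping.single i (?a - k)))"
    by (simp add: sum_distrib_left of_nat_mpoly var_power power_mult_distrib const_power const_mult[symmetric] mon_mult[symmetric] ac_simps)
  also have "\<dots> = (\<Sum>k\<le>?a. const (of_nat (?a choose k) * s ^ k) * mon (shj j i k A))"
  proof (intro sum.cong refl arg_cong2[where f="(*)"] arg_cong[where f=mon])
    fix k assume "k \<in> {..?a}"
    then show "A' + Poly_Mapping.single j k + Poly_Mapping.single i (?a - k) = shj j i k A"
      using assms(1) by (auto simp: expo_eq_iff lookup_shj A'_def lookup_add lookup_minus lookup_single when_def)
  qed
  finally show ?thesis .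
qed




lemma pow_diff_expand:
  fixes s :: "'k::comm_ring_1"
  shows "(s + 1) ^ k - s ^ k = (\<Sum>j<k. of_nat (k choose j) * s ^ j)"
proof -
  have "(s + 1) ^ k = (\<Sum>j\<le>k. of_nat (k choose j) * s ^ j)"
    by (simp add: binomial_ring)
  also have "\<dots> = (\<Sum>j<k. of_nat (k choose j) * s ^ j) + s ^ k"
    by (simp add: lessThan_Suc_atMost[symmetric])
  finally show ?thesis by simp
qed

lemma sep_lemma:
  fixes V :: "'k::field_char_0 mpoly set"
  assumes add: "\<And>p q. p \<in> V \<Longrightarrow> q \<in> V \<Longrightarrow> p + q \<in> V"
    and scale: "\<And>p a. p \<in> V \<Longrightarrow> const a * p \<in> V"
  shows "(\<forall>s. (\<Sum>k\<le>N. const (s ^ k) * v k) \<in> V) \<Longrightarrow> k \<le> N \<Longrightarrow> v k \<in> V"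
proof (induction N arbitrary: v k)
  case 0
  then show ?case using 0 by (metis atMost_0 empty_iff finite.intros(1) le_zero_eq mult_1 power_0 const_1 sum.insert sum.empty add_0_right)
next
  case (Suc N)
  have diff: "p \<in> V \<Longrightarrow> q \<in> V \<Longrightarrow> p - q \<in> V" for p q
  proof -
    assume "p \<in> V" "q \<in> V"
    have "const (-1) * q = - q" by (simp add: const_def single_uminus)
    then show ?thesis using add[of p "const (-1) * q"] scale[of q "-1"] \<open>p \<in> V\<close> \<open>q \<in> V\<close> by simp
  qed
  define w where "w j = (\<Sum>i\<in>{Suc j..Suc N}. const (of_nat (i choose j)) * v i)" for j
  have W: "(\<Sum>j\<le>N. const (s ^ j) * w j) \<in> V" for s
  proof -
    have "(\<Sum>k\<le>Suc N. const ((s+1) ^ k) * v k) - (\<Sum>k\<le>Suc N. const (s ^ k) * v k) \<in> V"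
      using Suc.prems(1) by (intro diff) auto
    also have "(\<Sum>k\<le>Suc N. const ((s+1) ^ k) * v k) - (\<Sum>k\<le>Suc N. const (s ^ k) * v k)
        = (\<Sum>k\<le>Suc N. const ((s+1) ^ k - s ^ k) * v k)"
      by (simp only: sum_subtractf[symmetric] const_diff left_diff_distrib)
    also have "\<dots> = (\<Sum>k\<le>Suc N. \<Sum>j<k. const (of_nat (k choose j) * s ^ j) * v k)"
      by (simp only: pow_diff_expand const_sum[OF finite_lessThan] sum_distrib_right)
    also have "\<dots> = (\<Sum>j<Suc N. \<Sum>k\<in>{Suc j..Suc N}. const (of_nat (k choose j) * s ^ j) * v k)"
      by (rule sum.nested_swap')
    also have "\<dots> = (\<Sum>j\<le>N. const (s ^ j) * w j)"
      unfolding lessThan_Suc_atMost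
    proof (rule sum.cong[OF refl])
      fix j
      show "(\<Sum>k\<in>{Suc j..Suc N}. const (of_nat (k choose j) * s ^ j) * v k) = const (s ^ j) * w j"
        unfolding w_def sum_distrib_left
        by (rule sum.cong[OF refl]) (simp add: const_mult[symmetric] ac_simps)
    qed
    finally show ?thesis .
  qed
  have wV: "j \<le> N \<Longrightarrow> w j \<in> V" for j
    using Suc.IH[of w j] W by blast
  have "w N = const (of_nat (Suc N)) * v (Suc N)"
    by (simp add: w_def)
  moreover have nz: "(1 + of_nat N :: 'k) \<noteq> 0" using of_nat_neq_0[of N, where 'a='k] by simp
  ultimately have "const (1 / of_nat (Suc N)) * w N = v (Suc N)"
    by (simp add: mult.assoc[symmetric] const_mult)
  then have vN: "v (Suc N) \<in> V" using scale[OF wV[OF order.refl]] by metis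
  show ?case
  proof (cases "k = Suc N")
    case True then show ?thesis using vN by simp
  next
    case False
    then have kN: "k \<le> N" using Suc.prems(2) by simp
    have "(\<Sum>k\<le>N. const (s ^ k) * v k) \<in> V" for s
    proof -
      have "(\<Sum>k\<le>Suc N. const (s ^ k) * v k) - const (s ^ Suc N) * v (Suc N) \<in> V"
        using Suc.prems(1) scale[OF vN] by (intro diff) auto
      then show ?thesis by simp
    qed
    then show ?thesis using Suc.IH kN by blast
  qed
qed

lemma mmul_el_left:
  assumes "a \<le> n" "i \<le> n" "j \<noteq> i"
  shows "mmul n (el j i s) h a b = h a b + (if a = j then s * h i b else 0)"
proof -
  have "mmul n (el j i s) h a b = (\<Sum>k\<le>n. (if k = a then h a b else 0) + (if a = j \<and> k = i then s * h i b else 0))"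
    unfolding mmul_def el_def using assms by (intro sum.cong refl) auto
  also have "\<dots> = h a b + (if a = j then s * h i b else 0)"
    using assms by (simp add: sum.distrib)
  finally show ?thesis .
qed

lemma mmul_dg_left:
  assumes "a \<le> n"
  shows "mmul n (dg d) h a b = d a * h a b"
proof -
  have "mmul n (dg d) h a b = (\<Sum>k\<le>n. if k = a then d a * h a b else 0)"
    unfolding mmul_def dg_def by (intro sum.cong refl) auto
  then show ?thesis using assms by simp
qed

lemma mmul_idm_right:
  assumes "b \<le> n"
  shows "mmul n g idm a b = g a b"
proof -
  have "mmul n g idm a b = (\<Sum>k\<le>n. if k = b then g a b else 0)"
    unfolding mmul_def idm_def by (intro sum.cong refl) auto
  then show ?thesis using assms by simp
qed

lemma mmul_idm_left:
  assumes "a \<le> n"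
  shows "mmul n idm g a b = g a b"
proof -
  have "mmul n idm g a b = (\<Sum>k\<le>n. if k = a then g a b else 0)"
    unfolding mmul_def idm_def by (intro sum.cong refl) auto
  then show ?thesis using assms by simp
qed

lemma el_el:
  assumes "a \<le> n" "i \<le> n" "j \<noteq> i"
  shows "mmul n (el j i s) (el j i t) a b = el j i (s + t) a b"
  using assms by (auto simp: mmul_el_left el_def algebra_simps)

lemma el_zero: "el j i 0 = idm"
  by (auto simp: el_def idm_def fun_eq_iff)

lemma el_borel:
  fixes s :: "'k::comm_ring_1"
  assumes "j < i" "i \<le> n"
  shows "el j i s \<in> borel n"
  unfolding borel_def upper_triangular_def invertible_mat_def
proof (intro CollectI conjI)
  show "\<forall>a\<le>n. \<forall>b\<le>n. b < a \<longrightarrow> el j i s a b = 0"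
    using assms by (auto simp: el_def)
  show "\<exists>h. \<forall>a\<le>n. \<forall>b\<le>n. (\<Sum>k\<le>n. el j i s a k * h k b) = (if a = b then 1 else 0) \<and>
      (\<Sum>k\<le>n. h a k * el j i s k b) = (if a = b then 1 else 0)"
  proof (intro exI[of _ "el j i (-s)"] allI impI conjI)
    fix a b :: nat assume ab: "a \<le> n" "b \<le> n"
    show "(\<Sum>k\<le>n. el j i s a k * el j i (-s) k b) = (if a = b then 1 else 0)"
      using el_el[OF ab(1) assms(2), of j s "-s" b] assms by (simp add: mmul_def el_zero idm_def)
    show "(\<Sum>k\<le>n. el j i (-s) a k * el j i s k b) = (if a = b then 1 else 0)"
      using el_el[OF ab(1) assms(2), of j "-s" s b] assms by (simp add: mmul_def el_zero idm_def)
  qed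
qed

lemma dg_borel:
  fixes d :: "nat \<Rightarrow> 'k::field"
  assumes "\<And>l. l \<le> n \<Longrightarrow> d l \<noteq> 0"
  shows "dg d \<in> borel n"
  unfolding borel_def upper_triangular_def invertible_mat_def
proof (intro CollectI conjI)
  show "\<forall>a\<le>n. \<forall>b\<le>n. b < a \<longrightarrow> dg d a b = 0"
    by (auto simp: dg_def)
  show "\<exists>h. \<forall>a\<le>n. \<forall>b\<le>n. (\<Sum>k\<le>n. dg d a k * h k b) = (if a = b then 1 else 0) \<and>
      (\<Sum>k\<le>n. h a k * dg d k b) = (if a = b then 1 else 0)"
  proof (intro exI[of _ "dg (\<lambda>l. inverse (d l))"] allI impI conjI)
    fix a b :: nat assume ab: "a \<le> n" "b \<le> n"
    show "(\<Sum>k\<le>n. dg d a k * dg (\<lambda>l. inverse (d l)) k b) = (if a = b then 1 else 0)"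
      using mmul_dg_left[OF ab(1), of d "dg (\<lambda>l. inverse (d l))" b] assms ab
      by (auto simp: mmul_def dg_def)
    have "(\<Sum>k\<le>n. dg (\<lambda>l. inverse (d l)) a k * dg d k b) = inverse (d a) * dg d a b"
      using mmul_dg_left[OF ab(1), of "\<lambda>l. inverse (d l)" "dg d" b] by (simp add: mmul_def)
    then show "(\<Sum>k\<le>n. dg (\<lambda>l. inverse (d l)) a k * dg d k b) = (if a = b then 1 else 0)"
      using assms ab by (auto simp: dg_def)
  qed
qed




context bsetup
begin

lemma I_add: "p \<in> I \<Longrightarrow> q \<in> I \<Longrightarrow> p + q \<in> I"
  using hom by (auto simp: homog_ideal_def is_ideal_def)

lemma I_scale: "p \<in> I \<Longrightarrow> const a * p \<in> I"
  using hom by (auto simp: homog_ideal_def is_ideal_def)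

lemma F_mon: "A \<in> F \<Longrightarrow> mon A \<in> I"
  by (simp add: Fset_def)

lemma I_act: "g \<in> borel n \<Longrightarrow> p \<in> I \<Longrightarrow> act n g p \<in> I"
  using bfix by (auto simp: borel_fixed_def)

lemma F_closed:
  assumes A: "A \<in> F" and ji: "j < i" "i \<le> n" and k: "k \<le> Poly_Mapping.lookup A i"
  shows "shj j i k A \<in> F"
proof -
  let ?a = "Poly_Mapping.lookup A i"
  have Ae: "is_expo n A" using A by (simp add: Fset_def Pmn_def)
  have "(\<Sum>k\<le>?a. const (s ^ k) * (const (of_nat (?a choose k)) * mon (shj j i k A))) \<in> I" for s
  proof -
    have "act n (el j i s) (mon A) \<in> I"
      by (rule I_act[OF el_borel[OF ji] F_mon[OF A]])
    then show ?thesis using ji Ae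
      by (simp add: act_el_mon mult.assoc[symmetric] const_mult ac_simps)
  qed
  then have "const (of_nat (?a choose k)) * mon (shj j i k A) \<in> I"
    using sep_lemma[where V=I and N="?a" and v="\<lambda>k. const (of_nat (?a choose k)) * mon (shj j i k A)" and k=k] I_add I_scale k
    by blast
  then have "const (1 / of_nat (?a choose k)) * (const (of_nat (?a choose k)) * mon (shj j i k A)) \<in> I"
    by (rule I_scale)
  moreover have "(of_nat (?a choose k) :: 'k) \<noteq> 0" using k by simp
  ultimately have "mon (shj j i k A) \<in> I"
    by (simp add: mult.assoc[symmetric] const_mult)
  moreover have "shj j i k A \<in> Pmn m n"
    using ji k A by (intro Pmn_shj) (auto simp: Fset_def)
  ultimately show ?thesis by (simp add: Fset_def)
qed

definition Pg :: "(nat \<Rightarrow> nat \<Rightarrow> 'k) \<Rightarrow> 'k \<Rightarrow> bool" where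
  "Pg g t \<longleftrightarrow> t \<noteq> 0 \<and> (\<forall>A\<in>F. Poly_Mapping.keys (act n g (mon A)) \<subseteq> F) \<and>
     (\<forall>A\<in>F. piR (act n g (sigma A)) = const t * phi (act n g (mon A)))"

lemma repr_F:
  assumes "Poly_Mapping.keys p \<subseteq> F"
  shows "p = (\<Sum>A\<in>F. const (Poly_Mapping.lookup p A) * mon A)"
  by (rule mpoly_repr[OF finite_F assms])

lemma keys_scale: "Poly_Mapping.keys (const a * q) \<subseteq> Poly_Mapping.keys q"
  by (auto simp: in_keys_iff lookup_const_mult)

lemma act_repr_F:
  assumes "Poly_Mapping.keys p \<subseteq> F"
  shows "act n g p = (\<Sum>A\<in>F. const (Poly_Mapping.lookup p A) * act n g (mon A))"
  by (subst repr_F[OF assms]) (simp add: act_sum act_scale)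

lemma Pg_keys:
  assumes "Pg g t" "Poly_Mapping.keys p \<subseteq> F"
  shows "Poly_Mapping.keys (act n g p) \<subseteq> F"
proof -
  have "act n g p = (\<Sum>A\<in>F. const (Poly_Mapping.lookup p A) * act n g (mon A))"
    by (subst repr_F[OF assms(2)]) (simp add: act_sum act_scale)
  also have "Poly_Mapping.keys \<dots> \<subseteq> F"
  proof -
    have "Poly_Mapping.keys (const (Poly_Mapping.lookup p A) * act n g (mon A)) \<subseteq> F" if "A \<in> F" for A
      using assms(1) that keys_scale unfolding Pg_def by blast
    then show ?thesis using keys_sum by fastforce
  qed
  finally show ?thesis .
qed

lemma Pg_lin:
  assumes "Pg g t" "Poly_Mapping.keys p \<subseteq> F"
  shows "piR (act n g (phi p)) = const t * phi (act n g p)"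
proof -
  have "piR (act n g (phi p)) = (\<Sum>A\<in>F. const (Poly_Mapping.lookup p A) * piR (act n g (sigma A)))"
    by (simp add: phi_def act_sum act_scale piR_sum piR_scale)
  also have "\<dots> = (\<Sum>A\<in>F. const (Poly_Mapping.lookup p A) * (const t * phi (act n g (mon A))))"
    using assms(1) unfolding Pg_def by (intro sum.cong refl) auto
  also have "\<dots> = const t * phi (act n g p)"
    by (simp add: act_repr_F[OF assms(2)] phi_sum phi_scale sum_distrib_left ac_simps)
  finally show ?thesis .
qed

lemma keys_sigma_Pmn: "Poly_Mapping.keys (sigma A) \<subseteq> Pmn m n"
  using keys_sigma R_Pmn by blast

lemma Pg_mult:
  assumes g: "Pg g t1" and h: "Pg h t2"
  shows "Pg (mmul n g h) (t1 * t2)"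
  unfolding Pg_def
proof (intro conjI ballI)
  show "t1 * t2 \<noteq> 0" using g h by (simp add: Pg_def)
  fix A assume A: "A \<in> F"
  have hA: "Poly_Mapping.keys (act n h (mon A)) \<subseteq> F" using h A by (simp add: Pg_def)
  show "Poly_Mapping.keys (act n (mmul n g h) (mon A)) \<subseteq> F"
    using Pg_keys[OF g hA] by (simp add: act_comp)
  let ?q = "act n h (sigma A)"
  have kq: "Poly_Mapping.keys ?q \<subseteq> Pmn m n" by (rule keys_act_Pmn[OF keys_sigma_Pmn])
  have kq2: "Poly_Mapping.keys (?q - piR ?q) \<subseteq> F"
  proof
    fix C assume C: "C \<in> Poly_Mapping.keys (?q - piR ?q)"
    then have "C \<notin> R" by (auto simp: in_keys_iff lookup_minus lookup_piR)
    moreover have "C \<in> Pmn m n" using C kq by (auto simp: in_keys_iff lookup_minus lookup_piR split: if_splits)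
    ultimately show "C \<in> F" using Pmn_FR by blast
  qed
  have "piR (act n (mmul n g h) (sigma A)) = piR (act n g (piR ?q)) + piR (act n g (?q - piR ?q))"
    by (simp add: act_comp[symmetric] act_diff piR_diff)
  also have "piR (act n g (?q - piR ?q)) = 0"
    by (rule piR_F[OF Pg_keys[OF g kq2]])
  also have "piR ?q = const t2 * phi (act n h (mon A))" using h A by (simp add: Pg_def)
  also have "piR (act n g (const t2 * phi (act n h (mon A)))) = const t2 * (const t1 * phi (act n g (act n h (mon A))))"
    by (simp add: act_scale piR_scale Pg_lin[OF g hA])
  finally show "piR (act n (mmul n g h) (sigma A)) = const (t1 * t2) * phi (act n (mmul n g h) (mon A))"
    by (simp add: act_comp const_mult[symmetric] ac_simps)
qed

lemma Pg_cong:
  assumes "Pg g t" "\<And>a b. a \<le> n \<Longrightarrow> b \<le> n \<Longrightarrow> g a b = g' a b"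
  shows "Pg g' t"
proof -
  have "act n g p = act n g' p" if "p \<in> Spoly n" for p by (rule act_cong[OF that assms(2)])
  moreover have "mon A \<in> Spoly n" if "A \<in> F" for A using that by (intro Spoly_mon) (simp add: Fset_def Pmn_def)
  ultimately show ?thesis using assms(1) Spoly_sigma unfolding Pg_def by metis
qed

end




context bsetup
begin

definition F1 :: "expo set" where "F1 = F - {A\<in>F. \<exists>B\<in>R. c A B \<noteq> 0}"
definition F2 :: "expo set" where "F2 = F \<union> {B\<in>R. \<exists>A\<in>F. c A B \<noteq> 0}"

definition wt :: "(nat \<Rightarrow> int) \<Rightarrow> expo \<Rightarrow> expo \<Rightarrow> bool" where
  "wt K A B \<longleftrightarrow> (\<forall>l. int (Poly_Mapping.lookup B l) = int (Poly_Mapping.lookup A l) + K l)"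

lemma wt_diff: "wt K A B \<longleftrightarrow> (\<forall>l. int (Poly_Mapping.lookup B l) - int (Poly_Mapping.lookup A l) = K l)"
  by (auto simp: wt_def algebra_simps)

lemma wt_uniq_right:
  assumes "wt K A B" "wt K A B'" shows "B = B'"
proof (rule poly_mapping_eqI)
  fix l
  have "int (Poly_Mapping.lookup B l) = int (Poly_Mapping.lookup B' l)"
    using assms by (simp add: wt_def)
  then show "Poly_Mapping.lookup B l = Poly_Mapping.lookup B' l" by simp
qed

lemma wt_uniq_left:
  assumes "wt K A B" "wt K A' B" shows "A = A'"
proof (rule poly_mapping_eqI)
  fix l
  have "int (Poly_Mapping.lookup A l) = int (Poly_Mapping.lookup A' l)"
    using assms by (simp add: wt_def)
  then show "Poly_Mapping.lookup A l = Poly_Mapping.lookup A' l" by simp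
qed

lemma wt_addDelta:
  assumes "1 \<le> i" "1 \<le> Poly_Mapping.lookup A i" "1 \<le> Poly_Mapping.lookup B i"
  shows "wt K (addDelta A i) (addDelta B i) \<longleftrightarrow> wt K A B"
proof -
  have "int (Poly_Mapping.lookup (addDelta B i) l) - int (Poly_Mapping.lookup (addDelta A i) l)
      = int (Poly_Mapping.lookup B l) - int (Poly_Mapping.lookup A l)" for l
    using assms by (auto simp: addDelta_shj lookup_shj of_nat_diff)
  then show ?thesis by (simp add: wt_diff)
qed

lemma filter_step:
  assumes "is_filter m n X" "A \<in> X" "i \<in> {1..n}" "1 \<le> Poly_Mapping.lookup A i"
  shows "addDelta A i \<in> X"
proof -
  have "A \<in> Pmn m n" using assms by (auto simp: is_filter_def)
  then have "P_step m n A (addDelta A i)" using assms(3,4) by (auto simp: P_step_def)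
  then have "P_le m n A (addDelta A i)" by (simp add: P_le_def)
  then show ?thesis using assms(1,2) by (auto simp: is_filter_def)
qed

lemma F1_F: "F1 \<subseteq> F" by (auto simp: F1_def)

lemma F1_zero: "A \<in> F1 \<Longrightarrow> c A B = 0"
  using c_nz by (auto simp: F1_def)

lemma notF1: "A \<in> F \<Longrightarrow> A \<notin> F1 \<Longrightarrow> \<exists>B. c A B \<noteq> 0"
  by (auto simp: F1_def)

lemma F2_R: "B \<in> F2 \<Longrightarrow> B \<in> R \<Longrightarrow> \<exists>A. c A B \<noteq> 0"
  by (auto simp: F2_def dest: FR_disj)

lemma c_F2: "c A B \<noteq> 0 \<Longrightarrow> B \<in> F2"
  using c_nz by (auto simp: F2_def)

end

locale rsetup = bsetup n m I c for n m and I :: "'k::field_char_0 mpoly set" and c +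
  fixes K :: "nat \<Rightarrow> int"
  assumes wK: "\<And>A B. c A B \<noteq> 0 \<Longrightarrow> wt K A B"
    and filt1: "is_filter m n F1"
    and filt2: "is_filter m n F2"
    and ratio: "\<And>A B i. A \<in> F - F1 \<Longrightarrow> wt K A B \<Longrightarrow> i \<in> {1..n} \<Longrightarrow> addDelta A i \<in> F - F1 \<Longrightarrow>
        c (addDelta A i) (addDelta B i) = of_nat (Poly_Mapping.lookup B i) / of_nat (Poly_Mapping.lookup A i) * c A B"
begin

lemma SR:
  assumes A: "A \<in> F" and i: "i \<in> {1..n}" and ai: "1 \<le> Poly_Mapping.lookup A i"
    and bi: "1 \<le> Poly_Mapping.lookup B i" and X: "addDelta B i \<in> R"
  shows "of_nat (Poly_Mapping.lookup B i) * c A B = of_nat (Poly_Mapping.lookup A i) * c (addDelta A i) (addDelta B i)"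
proof (cases "A \<in> F1")
  case True
  then have "addDelta A i \<in> F1" using filter_step[OF filt1 True i ai] by simp
  then show ?thesis using True by (simp add: F1_zero)
next
  case False
  then obtain B0 where B0: "c A B0 \<noteq> 0" using notF1 A by blast
  have A'F: "addDelta A i \<in> F" using F_closed[OF A, of "i-1" i 1] i ai by (auto simp: addDelta_shj)
  have ij: "i - 1 \<noteq> i" using i by auto
  show ?thesis
  proof (cases "addDelta A i \<in> F1")
    case True
    have "c A B = 0"
    proof (rule ccontr)
      assume nz: "c A B \<noteq> 0"
      then have "B \<in> F2" by (rule c_F2)
      then have "addDelta B i \<in> F2" using filter_step[OF filt2 _ i bi] by simp
      then obtain A'' where A'': "c A'' (addDelta B i) \<noteq> 0" using F2_R X by blast
      have "wt K A'' (addDelta B i)" "wt K A B" using wK A'' nz by auto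
      then have "wt K (addDelta A i) (addDelta B i)"
        using wt_addDelta[of i A B K] i bi ai by auto
      then have "A'' = addDelta A i" using wt_uniq_left \<open>wt K A'' (addDelta B i)\<close> by blast
      then show False using A'' True F1_zero by simp
    qed
    then show ?thesis using True F1_zero by simp
  next
    case False2: False
    have wB0: "wt K A B0" using wK B0 by simp
    have rat: "c (addDelta A i) (addDelta B0 i) = of_nat (Poly_Mapping.lookup B0 i) / of_nat (Poly_Mapping.lookup A i) * c A B0"
      using ratio[OF _ wB0 i] A False A'F False2 by auto
    have ai0: "(of_nat (Poly_Mapping.lookup A i) :: 'k) \<noteq> 0" using ai by simp
    show ?thesis
    proof (cases "B = B0")
      case True then show ?thesis using rat ai0 by (simp add: field_simps)
    next
      case False3: False
      have cAB: "c A B = 0"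
      proof (rule ccontr)
        assume "c A B \<noteq> 0" then have "wt K A B" by (rule wK)
        then show False using wt_uniq_right[OF wB0] False3 by auto
      qed
      have "c (addDelta A i) (addDelta B i) = 0"
      proof (rule ccontr)
        assume "c (addDelta A i) (addDelta B i) \<noteq> 0"
        then have w: "wt K (addDelta A i) (addDelta B i)" by (rule wK)
        have "wt K A B" using w wt_addDelta[of i A B K] i bi ai by auto
        then show False using wt_uniq_right[OF wB0] False3 by auto
      qed
      then show ?thesis using cAB by simp
    qed
  qed
qed

end




context rsetup
begin

lemma H1:
  assumes C: "C \<in> R" and i: "i \<in> {1..n}" and jd: "j = i - 1" and k0: "k \<le> Poly_Mapping.lookup C j"
  shows "shj i j k C \<in> R"
proof -
  have k: "k \<le> Poly_Mapping.lookup C (i - 1)" using k0 jd by simp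
  have "shj i (i - 1) k C \<in> R"
  proof -
  have ij: "i - 1 \<noteq> i" "i - 1 < i" "i \<le> n" "i - 1 \<le> n" using i by auto
  have P: "shj i (i - 1) k C \<in> Pmn m n"
    using C ij k by (intro Pmn_shj) (auto dest: R_Pmn)
  show ?thesis
  proof (rule ccontr)
    assume "shj i (i - 1) k C \<notin> R"
    then have XF: "shj i (i - 1) k C \<in> F" using Pmn_FR[OF P] by blast
    have "k \<le> Poly_Mapping.lookup (shj i (i - 1) k C) i" using ij by (simp add: lookup_shj)
    then have "shj (i - 1) i k (shj i (i - 1) k C) \<in> F" using F_closed[OF XF ij(2,3)] by blast
    moreover have "shj (i - 1) i k (shj i (i - 1) k C) = C"
      using shj_back[OF ij(1), of k "shj i (i - 1) k C" C] k by simp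
    ultimately show False using C FR_disj by simp
  qed
  qed
  then show ?thesis using jd by simp
qed

lemma claim:
  assumes i: "i \<in> {1..n}" and j_def: "j = i - 1"
  shows "A \<in> F \<Longrightarrow> C \<in> R \<Longrightarrow>
    (if k \<le> Poly_Mapping.lookup C j then of_nat (Poly_Mapping.lookup C i + k choose k) * c A (shj i j k C) else 0)
  = (if k \<le> Poly_Mapping.lookup A i then of_nat (Poly_Mapping.lookup A i choose k) * c (shj j i k A) C else 0)"
proof (induction k arbitrary: A)
  case 0
  then show ?case by simp
next
  case (Suc k)
  note A = Suc.prems(1) and C = Suc.prems(2)
  have ij: "j \<noteq> i" "j < i" "i \<le> n" "j \<le> n" "i \<ge> 1" using i by (auto simp: j_def)
  have ad: "addDelta X i = shj j i 1 X" for X by (simp add: addDelta_shj j_def)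
  show ?case
  proof (cases "Poly_Mapping.lookup A i = 0")
    case a0: True
    have "c A (shj i j (Suc k) C) = 0" if kC: "Suc k \<le> Poly_Mapping.lookup C j"
    proof (rule ccontr)
      let ?B = "shj i j (Suc k) C"
      assume nz: "c A ?B \<noteq> 0"
      have Bi: "Poly_Mapping.lookup ?B i = Poly_Mapping.lookup C i + Suc k" using ij by (simp add: lookup_shj)
      have "?B \<in> F2" using nz by (rule c_F2)
      then have XF2: "addDelta ?B i \<in> F2" using filter_step[OF filt2 _ i] Bi by simp
      have Xeq: "addDelta ?B i = shj i j k C"
        using ij kC by (auto simp: expo_eq_iff ad lookup_shj)
      have XR: "addDelta ?B i \<in> R" using H1[OF C i j_def, of k] kC Xeq by simp
      obtain A'' where A'': "c A'' (addDelta ?B i) \<noteq> 0" using F2_R[OF XF2 XR] by blast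
      have w1: "wt K A'' (addDelta ?B i)" using wK A'' by simp
      have w2: "wt K A ?B" using wK nz by simp
      have "int (Poly_Mapping.lookup (addDelta ?B i) i) = int (Poly_Mapping.lookup A'' i) + K i"
        using w1 by (simp add: wt_def)
      moreover have "int (Poly_Mapping.lookup ?B i) = int (Poly_Mapping.lookup A i) + K i"
        using w2 by (simp add: wt_def)
      moreover have "Poly_Mapping.lookup (addDelta ?B i) i = Poly_Mapping.lookup ?B i - 1"
        using ij by (simp add: ad lookup_shj)
      ultimately show False using a0 Bi by simp
    qed
    then show ?thesis using a0 by simp
  next
    case a1: False
    let ?a = "Poly_Mapping.lookup A i"
    define A' where "A' = addDelta A i"
    have A'F: "A' \<in> F" using F_closed[OF A ij(2,3), of 1] a1 by (simp add: A'_def ad)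
    have A'i: "Poly_Mapping.lookup A' i = ?a - 1" using ij by (simp add: A'_def addDelta_shj lookup_shj j_def)
    have IH: "(if k \<le> Poly_Mapping.lookup C j then of_nat (Poly_Mapping.lookup C i + k choose k) * c A' (shj i j k C) else 0)
       = (if k \<le> ?a - 1 then of_nat ((?a - 1) choose k) * c (shj j i (Suc k) A) C else 0)"
      using Suc.IH[OF A'F C] A'i ij by (simp add: A'_def ad shj_shj)
    obtain a' where a': "?a = Suc a'" using a1 by (cases ?a) auto
    have R: "of_nat (Suc k) * (if Suc k \<le> ?a then of_nat (?a choose Suc k) * c (shj j i (Suc k) A) C else 0)
       = (of_nat ?a :: 'k) * (if k \<le> ?a - 1 then of_nat ((?a - 1) choose k) * c (shj j i (Suc k) A) C else 0)"
    proof -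
      have "(of_nat (Suc k) * of_nat (Suc a' choose Suc k) :: 'k) = of_nat (Suc a') * of_nat (a' choose k)"
        using Suc_times_binomial[of k a'] by (metis of_nat_mult)
      then show ?thesis using a' by (simp add: mult.assoc[symmetric])
    qed
    have L: "of_nat (Suc k) * (if Suc k \<le> Poly_Mapping.lookup C j then of_nat (Poly_Mapping.lookup C i + Suc k choose Suc k) * c A (shj i j (Suc k) C) else 0)
       = (of_nat ?a :: 'k) * (if k \<le> Poly_Mapping.lookup C j then of_nat (Poly_Mapping.lookup C i + k choose k) * c A' (shj i j k C) else 0)"
    proof (cases "Suc k \<le> Poly_Mapping.lookup C j")
      case True
      let ?B = "shj i j (Suc k) C"
      have Bi: "Poly_Mapping.lookup ?B i = Poly_Mapping.lookup C i + Suc k" using ij by (simp add: lookup_shj)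
      have Xeq: "addDelta ?B i = shj i j k C"
        using ij True by (auto simp: expo_eq_iff ad lookup_shj)
      have XR: "addDelta ?B i \<in> R" using H1[OF C i j_def, of k] True Xeq by simp
      have sr: "of_nat (Poly_Mapping.lookup ?B i) * c A ?B = of_nat ?a * c A' (addDelta ?B i)"
        using SR[OF A i _ _ XR] a1 Bi by (simp add: A'_def)
      have bin: "(of_nat (Suc k) * of_nat (Poly_Mapping.lookup C i + Suc k choose Suc k) :: 'k)
          = of_nat (Poly_Mapping.lookup C i + Suc k) * of_nat (Poly_Mapping.lookup C i + k choose k)"
        using Suc_times_binomial[of k "Poly_Mapping.lookup C i + k"] by (metis add_Suc_right of_nat_mult)
      have "of_nat (Suc k) * (of_nat (Poly_Mapping.lookup C i + Suc k choose Suc k) * c A ?B)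
          = of_nat (Poly_Mapping.lookup C i + k choose k) * (of_nat (Poly_Mapping.lookup ?B i) * c A ?B)"
        using bin Bi by (simp add: ac_simps)
      also have "\<dots> = of_nat ?a * (of_nat (Poly_Mapping.lookup C i + k choose k) * c A' (shj i j k C))"
        using sr Xeq by (simp add: ac_simps)
      finally show ?thesis using True by simp
    next
      case False
      show ?thesis
      proof (cases "k = Poly_Mapping.lookup C j")
        case False2: False
        then show ?thesis using False by simp
      next
        case kC: True
        have "c A' (shj i j k C) = 0"
        proof (rule ccontr)
          assume nz: "c A' (shj i j k C) \<noteq> 0"
          have "A \<notin> F1"
          proof
            assume "A \<in> F1"
            then have "A' \<in> F1" using filter_step[OF filt1 _ i] a1 by (simp add: A'_def)
            then show False using nz F1_zero by simp
          qed
          then obtain B0 where B0: "c A B0 \<noteq> 0" using notF1 A by blast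
          have w1: "wt K A B0" using wK B0 by simp
          have w2: "wt K A' (shj i j k C)" using wK nz by simp
          have "int (Poly_Mapping.lookup B0 j) = int (Poly_Mapping.lookup A j) + K j" using w1 by (simp add: wt_def)
          moreover have "int (Poly_Mapping.lookup (shj i j k C) j) = int (Poly_Mapping.lookup A' j) + K j" using w2 by (simp add: wt_def)
          moreover have "Poly_Mapping.lookup (shj i j k C) j = 0" using ij kC by (simp add: lookup_shj)
          moreover have "Poly_Mapping.lookup A' j = Poly_Mapping.lookup A j + 1"
            using ij by (simp add: A'_def ad lookup_shj)
          ultimately show False by simp
        qed
        then show ?thesis using False by simp
      qed
    qed
    have nz: "(of_nat (Suc k) :: 'k) \<noteq> 0" by (rule of_nat_neq_0)
    have eq: "of_nat (Suc k) * (if Suc k \<le> Poly_Mapping.lookup C j then of_nat (Poly_Mapping.lookup C i + Suc k choose Suc k) * c A (shj i j (Suc k) C) else 0)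
      = of_nat (Suc k) * (if Suc k \<le> ?a then of_nat (?a choose Suc k) * c (shj j i (Suc k) A) C else 0)"
      unfolding L R IH ..
    show ?thesis using mult_left_cancel[OF nz] eq by blast
  qed
qed

end




context rsetup
begin

lemma lookup_le_tdeg: "Poly_Mapping.lookup A i \<le> tdeg A"
proof (cases "i \<in> Poly_Mapping.keys A")
  case True then show ?thesis unfolding tdeg_def by (intro member_le_sum) auto
qed (simp add: in_keys_iff)

lemma sum_atMost_extend:
  fixes g :: "nat \<Rightarrow> 'a::comm_monoid_add"
  assumes "b \<le> M"
  shows "(\<Sum>k\<le>b. g k) = (\<Sum>k\<le>M. if k \<le> b then g k else 0)"
proof -
  have "(\<Sum>k\<le>M. if k \<le> b then g k else 0) = sum g {k\<in>{..M}. k \<le> b}"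
    by (rule sum.inter_filter[symmetric]) simp
  also have "{k\<in>{..M}. k \<le> b} = {..b}" using assms by auto
  finally show ?thesis by simp
qed

lemma Pg_ue:
  assumes i: "i \<in> {1..n}" and j_def: "j = i - 1"
  shows "Pg (el j i s) 1"
proof -
  have ij: "j \<noteq> i" "j < i" "i \<le> n" "j \<le> n" using i by (auto simp: j_def)
  have isexpoF: "is_expo n A" if "A \<in> F" for A using that by (simp add: Fset_def Pmn_def)
  have isexpoR: "is_expo n A" if "A \<in> R" for A using that by (simp add: Rset_def Pmn_def)
  have actA: "act n (el j i s) (mon A) = (\<Sum>k\<le>Poly_Mapping.lookup A i. const (of_nat (Poly_Mapping.lookup A i choose k) * s ^ k) * mon (shj j i k A))"
    if "is_expo n A" for A using act_el_mon[OF ij(1,3,4) that] .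
  have keysA: "Poly_Mapping.keys (act n (el j i s) (mon A)) \<subseteq> F" if A: "A \<in> F" for A
  proof -
    have "Poly_Mapping.keys (const (of_nat (Poly_Mapping.lookup A i choose k) * s ^ k) * mon (shj j i k A)) \<subseteq> F"
      if "k \<le> Poly_Mapping.lookup A i" for k
      using keys_scale[of _ "mon (shj j i k A)"] F_closed[OF A ij(2,3) that] by auto
    then have "(\<Union>k\<in>{..Poly_Mapping.lookup A i}. Poly_Mapping.keys (const (of_nat (Poly_Mapping.lookup A i choose k) * s ^ k) * mon (shj j i k A))) \<subseteq> F"
      by (intro UN_least) simp
    then show ?thesis unfolding actA[OF isexpoF[OF A]] using keys_sum by (rule order.trans[rotated])
  qed
  have main: "piR (act n (el j i s) (sigma A)) = const 1 * phi (act n (el j i s) (mon A))" if A: "A \<in> F" for A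
  proof (rule poly_mapping_eqI)
    fix C
    define Lk where "Lk k = (if k \<le> Poly_Mapping.lookup C j then of_nat (Poly_Mapping.lookup C i + k choose k) * c A (shj i j k C) else 0)" for k
    define Rk where "Rk k = (if k \<le> Poly_Mapping.lookup A i then of_nat (Poly_Mapping.lookup A i choose k) * c (shj j i k A) C else 0)" for k
    have LR: "C \<in> R \<Longrightarrow> Lk k = Rk k" for k unfolding Lk_def Rk_def by (rule claim[OF i j_def A])
    have rhs: "Poly_Mapping.lookup (phi (act n (el j i s) (mon A))) C = (\<Sum>k\<le>m. s ^ k * Rk k)"
    proof -
      have "Poly_Mapping.lookup (phi (act n (el j i s) (mon A))) C
          = (\<Sum>A'\<in>F. (\<Sum>k\<le>Poly_Mapping.lookup A i. (if shj j i k A = A' then of_nat (Poly_Mapping.lookup A i choose k) * s ^ k * c A' C else 0)))"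
        unfolding lookup_phi actA[OF isexpoF[OF A]]
        apply (intro sum.cong refl)
        apply (simp add: lookup_sum lookup_const_mult lookup_mon sum_distrib_right)
        apply (intro sum.cong refl)
        apply simp
        done
      also have "\<dots> = (\<Sum>k\<le>Poly_Mapping.lookup A i. \<Sum>A'\<in>F. (if shj j i k A = A' then of_nat (Poly_Mapping.lookup A i choose k) * s ^ k * c A' C else 0))"
        by (rule sum.swap)
      also have "\<dots> = (\<Sum>k\<le>Poly_Mapping.lookup A i. of_nat (Poly_Mapping.lookup A i choose k) * s ^ k * c (shj j i k A) C)"
        using F_closed[OF A ij(2,3)] finite_F by (intro sum.cong refl) (simp add: sum.delta)
      also have "\<dots> = (\<Sum>k\<le>m. s ^ k * Rk k)"
        using lookup_le_tdeg[of A i] A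
        by (subst sum_atMost_extend[of _ m]) (auto simp: Fset_def Pmn_def Rk_def intro!: sum.cong)
      finally show ?thesis .
    qed
    show "Poly_Mapping.lookup (piR (act n (el j i s) (sigma A))) C = Poly_Mapping.lookup (const 1 * phi (act n (el j i s) (mon A))) C"
    proof (cases "C \<in> R")
      case False
      have "Rk k = 0" for k using False c_nz unfolding Rk_def by auto
      then show ?thesis using False rhs by (simp add: lookup_piR)
    next
      case CR: True
      have "Poly_Mapping.lookup (act n (el j i s) (sigma A)) C
          = (\<Sum>B\<in>R. c A B * (\<Sum>k\<le>Poly_Mapping.lookup B i. of_nat (Poly_Mapping.lookup B i choose k) * s ^ k * (if shj j i k B = C then 1 else 0)))"
        unfolding sigma_def act_sum act_scale lookup_sum
        by (intro sum.cong refl) (simp add: actA isexpoR lookup_sum lookup_const_mult lookup_mon)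
      also have "\<dots> = (\<Sum>B\<in>R. \<Sum>k\<le>m. (if k \<le> Poly_Mapping.lookup B i \<and> shj j i k B = C then c A B * of_nat (Poly_Mapping.lookup B i choose k) * s ^ k else 0))"
      proof (intro sum.cong refl)
        fix B assume B: "B \<in> R"
        have "Poly_Mapping.lookup B i \<le> m" using lookup_le_tdeg[of B i] B by (simp add: Rset_def Pmn_def)
        then show "c A B * (\<Sum>k\<le>Poly_Mapping.lookup B i. of_nat (Poly_Mapping.lookup B i choose k) * s ^ k * (if shj j i k B = C then 1 else 0))
          = (\<Sum>k\<le>m. (if k \<le> Poly_Mapping.lookup B i \<and> shj j i k B = C then c A B * of_nat (Poly_Mapping.lookup B i choose k) * s ^ k else 0))"
          by (subst sum_atMost_extend[of _ m]) (auto simp: sum_distrib_left intro!: sum.cong)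
      qed
      also have "\<dots> = (\<Sum>k\<le>m. \<Sum>B\<in>R. (if k \<le> Poly_Mapping.lookup B i \<and> shj j i k B = C then c A B * of_nat (Poly_Mapping.lookup B i choose k) * s ^ k else 0))"
        by (rule sum.swap)
      also have "\<dots> = (\<Sum>k\<le>m. s ^ k * Lk k)"
      proof (intro sum.cong refl)
        fix k
        let ?X = "shj i j k C"
        have "(\<Sum>B\<in>R. (if k \<le> Poly_Mapping.lookup B i \<and> shj j i k B = C then c A B * of_nat (Poly_Mapping.lookup B i choose k) * s ^ k else 0))
            = (\<Sum>B\<in>R. (if B = ?X then (if k \<le> Poly_Mapping.lookup C j then c A ?X * of_nat (Poly_Mapping.lookup ?X i choose k) * s ^ k else 0) else 0))"
          by (intro sum.cong refl) (auto simp: shj_back[OF ij(1)])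
        also have "\<dots> = (if ?X \<in> R then (if k \<le> Poly_Mapping.lookup C j then c A ?X * of_nat (Poly_Mapping.lookup ?X i choose k) * s ^ k else 0) else 0)"
          using finite_R by (simp add: sum.delta')
        also have "\<dots> = s ^ k * Lk k"
          using c_nz[of A ?X] ij by (auto simp: Lk_def lookup_shj)
        finally show "(\<Sum>B\<in>R. (if k \<le> Poly_Mapping.lookup B i \<and> shj j i k B = C then c A B * of_nat (Poly_Mapping.lookup B i choose k) * s ^ k else 0)) = s ^ k * Lk k" .
      qed
      finally show ?thesis using CR rhs LR by (simp add: lookup_piR)
    qed
  qed
  show ?thesis unfolding Pg_def using keysA main by auto
qed

end




context rsetup
begin

lemma Pg_dg:
  assumes d: "\<And>l. l \<le> n \<Longrightarrow> d l \<noteq> 0" and nz: "c A0 B0 \<noteq> 0"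
  shows "Pg (dg d) (dprod d B0 / dprod d A0)"
proof -
  have dpnz: "dprod d A \<noteq> 0" if "is_expo n A" for A
    using that d unfolding dprod_def is_expo_def by (auto simp: prod_zero_iff)
  have A0: "A0 \<in> F" "B0 \<in> R" using c_nz[OF nz] by auto
  have e0: "is_expo n A0" "is_expo n B0" using A0 by (auto simp: Fset_def Rset_def Pmn_def)
  let ?t = "dprod d B0 / dprod d A0"
  have tnz: "?t \<noteq> 0" using dpnz e0 by simp
  have isexpoF: "is_expo n A" if "A \<in> F" for A using that by (simp add: Fset_def Pmn_def)
  have isexpoR: "is_expo n A" if "A \<in> R" for A using that by (simp add: Rset_def Pmn_def)
  have rel: "dprod d B = ?t * dprod d A" if cAB: "c A B \<noteq> 0" for A B
  proof -
    have w1: "wt K A B" "wt K A0 B0" using wK cAB nz by auto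
    have "B + A0 = B0 + A"
    proof (rule poly_mapping_eqI)
      fix l
      have "int (Poly_Mapping.lookup B l) = int (Poly_Mapping.lookup A l) + K l"
           "int (Poly_Mapping.lookup B0 l) = int (Poly_Mapping.lookup A0 l) + K l"
        using w1 by (auto simp: wt_def)
      then show "Poly_Mapping.lookup (B + A0) l = Poly_Mapping.lookup (B0 + A) l"
        by (simp add: lookup_add)
    qed
    then have "dprod d B * dprod d A0 = dprod d B0 * dprod d A" by (metis dprod_add)
    then show ?thesis using dpnz[OF e0(1)] by (simp add: field_simps)
  qed
  show ?thesis unfolding Pg_def
  proof (intro conjI ballI tnz)
    fix A assume A: "A \<in> F"
    show "Poly_Mapping.keys (act n (dg d) (mon A)) \<subseteq> F"
      using A by (auto simp: act_dg_mon isexpoF in_keys_iff lookup_const_mult lookup_mon split: if_splits)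
    show "piR (act n (dg d) (sigma A)) = const ?t * phi (act n (dg d) (mon A))"
    proof (rule poly_mapping_eqI)
      fix C
      have lhs: "Poly_Mapping.lookup (act n (dg d) (sigma A)) C = (if C \<in> R then c A C * dprod d C else 0)"
      proof -
        have "act n (dg d) (sigma A) = (\<Sum>B\<in>R. const (c A B * dprod d B) * mon B)"
          unfolding sigma_def act_sum act_scale
          by (intro sum.cong refl) (simp add: act_dg_mon isexpoR mult.assoc const_mult)
        then show ?thesis using finite_R by (simp add: lookup_sum_const_mon)
      qed
      have rhs: "phi (act n (dg d) (mon A)) = const (dprod d A) * sigma A"
        by (simp add: act_dg_mon isexpoF A phi_scale phi_mon)
      show "Poly_Mapping.lookup (piR (act n (dg d) (sigma A))) C = Poly_Mapping.lookup (const ?t * phi (act n (dg d) (mon A))) C"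
        unfolding rhs lookup_piR lhs
        using rel[of A C] c_nz[of A C] by (cases "c A C = 0") (auto simp: lookup_const_mult lookup_sigma)
    qed
  qed
qed

lemma Pg_idm: "Pg idm 1"
proof -
  have isexpoF: "is_expo n A" if "A \<in> F" for A using that by (simp add: Fset_def Pmn_def)
  have m: "act n idm (mon A) = mon A" if "A \<in> F" for A using that by (simp add: act_idm Spoly_mon isexpoF)
  have s: "act n idm (sigma A) = sigma A" for A by (simp add: act_idm Spoly_sigma)
  show ?thesis unfolding Pg_def
  proof (intro conjI ballI)
    fix A assume A: "A \<in> F"
    show "Poly_Mapping.keys (act n idm (mon A)) \<subseteq> F" using A by (simp add: m)
    show "piR (act n idm (sigma A)) = const 1 * phi (act n idm (mon A))"
      using A by (simp add: m s piR_id[OF keys_sigma] phi_mon)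
  qed simp
qed

lemma commutator:
  assumes "j < l" "l < i" "i \<le> n" "a \<le> n" "b \<le> n"
  shows "mmul n (el j l s) (mmul n (el l i 1) (mmul n (el j l (-s)) (el l i (-1)))) a b = el j i s a b"
  using assms by (auto simp: mmul_el_left el_def)

lemma Pg_el:
  assumes "i \<le> n" "j < i"
  shows "Pg (el j i s) 1"
  using assms
proof (induction "i - j" arbitrary: i j s rule: less_induct)
  case less
  show ?case
  proof (cases "j = i - 1")
    case True
    then show ?thesis using Pg_ue[OF _ True] less.prems by auto
  next
    case False
    let ?l = "i - 1"
    have jl: "j < ?l" "?l < i" "?l \<le> n" using False less.prems by auto
    have P1: "Pg (el j ?l s) 1" "Pg (el j ?l (-s)) 1"
      using less.hyps[of ?l j] jl less.prems by auto
    have P2: "Pg (el ?l i t) 1" for t using Pg_ue[of i ?l t] less.prems by auto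
    have "Pg (mmul n (el j ?l s) (mmul n (el ?l i 1) (mmul n (el j ?l (-s)) (el ?l i (-1))))) (1 * (1 * (1 * 1)))"
      by (intro Pg_mult P1 P2)
    then have "Pg (mmul n (el j ?l s) (mmul n (el ?l i 1) (mmul n (el j ?l (-s)) (el ?l i (-1))))) 1"
      by simp
    then show ?thesis
      by (rule Pg_cong) (use commutator[OF jl(1,2) less.prems(1)] in simp)
  qed
qed

definition supp :: "(nat \<Rightarrow> nat \<Rightarrow> 'k) \<Rightarrow> (nat \<times> nat) set" where
  "supp U = {(a, b). a < b \<and> b \<le> n \<and> U a b \<noteq> 0}"

lemma finite_supp: "finite (supp U)"
  by (rule finite_subset[of _ "{..n} \<times> {..n}"]) (auto simp: supp_def)

lemma Pg_unit:
  assumes "\<And>a. a \<le> n \<Longrightarrow> U a a = 1" "\<And>a b. a \<le> n \<Longrightarrow> b < a \<Longrightarrow> U a b = 0"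
  shows "Pg U 1"
  using assms
proof (induction "card (supp U)" arbitrary: U)
  case 0
  then have "supp U = {}" using finite_supp by simp
  then have "U a b = idm a b" if "a \<le> n" "b \<le> n" for a b
    using 0 that by (cases a b rule: linorder_cases) (auto simp: supp_def idm_def)
  then show ?case using Pg_cong[OF Pg_idm] by metis
next
  case (Suc N)
  then have ne: "supp U \<noteq> {}" by auto
  define c0 where "c0 = Max (snd ` supp U)"
  have c0in: "c0 \<in> snd ` supp U" unfolding c0_def using ne finite_supp by auto
  then obtain r where rc: "(r, c0) \<in> supp U" by auto
  have maxc: "b \<le> c0" if "(a, b) \<in> supp U" for a b
    unfolding c0_def using that finite_supp by (metis Max_ge finite_imageI image_eqI snd_conv)
  have r: "r < c0" "c0 \<le> n" "U r c0 \<noteq> 0" using rc by (auto simp: supp_def)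
  define U' where "U' = (\<lambda>a b. if a = r \<and> b = c0 then 0 else U a b)"
  have supp': "supp U' = supp U - {(r, c0)}" by (auto simp: supp_def U'_def)
  have "card (supp U') = N" using Suc.hyps(2) rc finite_supp by (simp add: supp')
  moreover have "U' a a = 1" if "a \<le> n" for a using Suc.prems(1)[OF that] r by (auto simp: U'_def)
  moreover have "U' a b = 0" if "a \<le> n" "b < a" for a b using Suc.prems(2)[OF that] by (auto simp: U'_def)
  ultimately have PU': "Pg U' 1" using Suc.hyps(1) by blast
  have row: "U' c0 b = (if b = c0 then 1 else 0)" if "b \<le> n" for b
  proof (cases b c0 rule: linorder_cases)
    case less then show ?thesis using Suc.prems(2)[of c0 b] r by (auto simp: U'_def)
  next
    case equal then show ?thesis using Suc.prems(1)[of c0] r by (auto simp: U'_def)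
  next
    case greater
    then have "(c0, b) \<notin> supp U" using maxc by force
    then show ?thesis using greater that r by (auto simp: U'_def supp_def)
  qed
  have "Pg (mmul n (el r c0 (U r c0)) U') (1 * 1)"
    by (intro Pg_mult Pg_el PU') (use r in auto)
  moreover have "mmul n (el r c0 (U r c0)) U' a b = U a b" if "a \<le> n" "b \<le> n" for a b
    using that r row[OF that(2)] by (auto simp: mmul_el_left U'_def)
  ultimately show ?case using Pg_cong by fastforce
qed

lemma borel_inv:
  fixes g :: "nat \<Rightarrow> nat \<Rightarrow> 'k"
  assumes g: "g \<in> borel n"
  obtains h where "h \<in> borel n" "\<And>a b. a \<le> n \<Longrightarrow> b \<le> n \<Longrightarrow> mmul n g h a b = idm a b"
    "\<And>a b. a \<le> n \<Longrightarrow> b \<le> n \<Longrightarrow> mmul n h g a b = idm a b" "\<And>a. a \<le> n \<Longrightarrow> g a a \<noteq> 0"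
proof -
  obtain h where h: "\<forall>a\<le>n. \<forall>b\<le>n. (\<Sum>k\<le>n. g a k * h k b) = (if a = b then 1 else 0) \<and>
      (\<Sum>k\<le>n. h a k * g k b) = (if a = b then 1 else 0)"
    using g by (auto simp: borel_def invertible_mat_def)
  have ut: "\<And>a b. a \<le> n \<Longrightarrow> b \<le> n \<Longrightarrow> b < a \<Longrightarrow> g a b = 0"
    using g by (auto simp: borel_def upper_triangular_def)
  have key: "b \<le> n \<Longrightarrow> g b b \<noteq> 0 \<and> (\<forall>a. a \<le> n \<longrightarrow> b < a \<longrightarrow> h a b = 0)" for b
  proof (induction b rule: less_induct)
    case (less b)
    have IH: "\<And>a k. k < b \<Longrightarrow> a \<le> n \<Longrightarrow> k < a \<Longrightarrow> h a k = 0" using less by auto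
    have sumb: "(\<Sum>k\<le>n. h a k * g k b) = h a b * g b b" if "a \<le> n" "b \<le> a" for a
    proof -
      have "(\<Sum>k\<le>n. h a k * g k b) = (\<Sum>k\<le>n. if k = b then h a b * g b b else 0)"
      proof (intro sum.cong refl)
        fix k assume "k \<in> {..n}"
        then show "h a k * g k b = (if k = b then h a b * g b b else 0)"
          using IH[of k a] ut[of k b] that less.prems by (cases k b rule: linorder_cases) auto
      qed
      then show ?thesis using less.prems by simp
    qed
    have "h b b * g b b = 1" using sumb[of b] h less.prems by auto
    then have gnz: "g b b \<noteq> 0" by auto
    have "h a b = 0" if "a \<le> n" "b < a" for a
      using sumb[of a] h less.prems that gnz by auto
    then show ?case using gnz by auto
  qed
  show ?thesis
  proof
    show "h \<in> borel n" unfolding borel_def upper_triangular_def invertible_mat_def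
      using key h by blast
    show "mmul n g h a b = idm a b" if "a \<le> n" "b \<le> n" for a b using h that by (simp add: mmul_def idm_def)
    show "mmul n h g a b = idm a b" if "a \<le> n" "b \<le> n" for a b using h that by (simp add: mmul_def idm_def)
    show "g a a \<noteq> 0" if "a \<le> n" for a using key that by blast
  qed
qed

lemma Pg_borel:
  fixes g :: "nat \<Rightarrow> nat \<Rightarrow> 'k"
  assumes g: "g \<in> borel n" and nz: "c A0 B0 \<noteq> 0"
  shows "\<exists>t. Pg g t"
proof -
  obtain h where gd: "\<And>a. a \<le> n \<Longrightarrow> g a a \<noteq> 0" using borel_inv[OF g] by metis
  have ut: "\<And>a b. a \<le> n \<Longrightarrow> b \<le> n \<Longrightarrow> b < a \<Longrightarrow> g a b = 0"
    using g by (auto simp: borel_def upper_triangular_def)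
  define d where "d a = g a a" for a
  define U where "U a b = g a b / g a a" for a b
  have "Pg U 1" by (rule Pg_unit) (use gd ut in \<open>auto simp: U_def\<close>)
  moreover have "Pg (dg d) (dprod d B0 / dprod d A0)" by (rule Pg_dg[OF _ nz]) (use gd in \<open>auto simp: d_def\<close>)
  ultimately have "Pg (mmul n (dg d) U) (dprod d B0 / dprod d A0 * 1)" by (intro Pg_mult)
  moreover have "mmul n (dg d) U a b = g a b" if "a \<le> n" "b \<le> n" for a b
    using that gd by (simp add: mmul_dg_left d_def U_def)
  ultimately show ?thesis using Pg_cong by blast
qed

end




context bsetup
begin

lemma keys_minus_piR:
  assumes "Poly_Mapping.keys q \<subseteq> Pmn m n"
  shows "Poly_Mapping.keys (q - piR q) \<subseteq> F"
proof
  fix C assume C: "C \<in> Poly_Mapping.keys (q - piR q)"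
  then have "C \<notin> R" by (auto simp: in_keys_iff lookup_minus lookup_piR)
  moreover have "C \<in> Pmn m n" using C assms by (auto simp: in_keys_iff lookup_minus lookup_piR split: if_splits)
  ultimately show "C \<in> F" using Pmn_FR by blast
qed

lemma sum_scaled_sigma: "(\<Sum>B\<in>R. const (t * c A B) * mon B) = const t * sigma A"
  by (simp add: sigma_def sum_distrib_left const_mult[symmetric] mult.assoc)

lemma def_gen_scaled: "def_gen n m I (\<lambda>A B. t * c A B) A = (mon A, const t * sigma A)"
  by (simp add: def_gen_def sum_scaled_sigma)

end

context rsetup
begin

lemma rhs_imp_eigen:
  assumes nz: "c A0 B0 \<noteq> 0"
  shows "borel_eigenvector n m I c"
  unfolding borel_eigenvector_def
proof (intro conjI ballI)
  show "\<exists>A B. c A B \<noteq> 0" using nz by blast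
  fix g :: "nat \<Rightarrow> nat \<Rightarrow> 'k" assume g: "g \<in> borel n"
  obtain h where h: "h \<in> borel n" "\<And>a b. a \<le> n \<Longrightarrow> b \<le> n \<Longrightarrow> mmul n g h a b = idm a b"
    using borel_inv[OF g] by metis
  obtain t where Ph: "Pg h t" using Pg_borel[OF h(1) nz] by blast
  have tnz: "t \<noteq> 0" using Ph by (simp add: Pg_def)
  let ?t' = "inverse t"
  show "\<exists>t. borel_act_is n m I g c (\<lambda>A B. t * c A B)"
  proof (intro exI[of _ ?t'])
    show "borel_act_is n m I g c (\<lambda>A B. ?t' * c A B)"
      unfolding borel_act_is_def
    proof (intro conjI ballI)
      show "grass_tangent n m I (\<lambda>A B. ?t' * c A B)"
        using c_nz by (auto simp: grass_tangent_def)
      fix A assume A: "A \<in> F"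
      have Ae: "is_expo n A" using A by (simp add: Fset_def Pmn_def)
      define f0 where "f0 = act n h (mon A)"
      define q where "q = act n h (sigma A)"
      define f1 where "f1 = const ?t' * q"
      have kf0: "Poly_Mapping.keys f0 \<subseteq> F" using Ph A by (simp add: Pg_def f0_def)
      have pq: "piR q = const t * phi f0" using Ph A by (simp add: Pg_def f0_def q_def)
      have kq: "Poly_Mapping.keys (q - piR q) \<subseteq> F"
        unfolding q_def by (rule keys_minus_piR[OF keys_act_Pmn[OF keys_sigma_Pmn]])
      have phif0: "phi f0 = const ?t' * piR q"
        using pq tnz by (simp add: mult.assoc[symmetric] const_mult)
      have J0: "(f0, f1) \<in> J"
      proof -
        have S: "f0 \<in> Spoly n" "f1 \<in> Spoly n" unfolding f0_def f1_def q_def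
          by (auto simp: Spoly_act intro!: Spoly_mult)
        have 1: "\<forall>x\<in>F. const (Poly_Mapping.lookup f0 x) \<in> Spoly n \<and> const (Poly_Mapping.lookup (const ?t' * (q - piR q)) x) \<in> Spoly n"
          by simp
        have 2: "f0 = (\<Sum>x\<in>F. const (Poly_Mapping.lookup f0 x) * mon x)" by (rule repr_F[OF kf0])
        have kq': "Poly_Mapping.keys (const ?t' * (q - piR q)) \<subseteq> F" using kq keys_scale by blast
        have 3: "f1 = (\<Sum>x\<in>F. const (Poly_Mapping.lookup f0 x) * sigma x + const (Poly_Mapping.lookup (const ?t' * (q - piR q)) x) * mon x)"
        proof -
          have "f1 = phi f0 + const ?t' * (q - piR q)"
            by (simp add: f1_def phif0 algebra_simps)
          also have "\<dots> = (\<Sum>x\<in>F. const (Poly_Mapping.lookup f0 x) * sigma x) + (\<Sum>x\<in>F. const (Poly_Mapping.lookup (const ?t' * (q - piR q)) x) * mon x)"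
            unfolding phi_def by (rule arg_cong2[where f="(+)"], rule refl, rule repr_F[OF kq'])
          finally show ?thesis by (simp add: sum.distrib)
        qed
        have "\<exists>a b. (\<forall>x\<in>F. a x \<in> Spoly n \<and> b x \<in> Spoly n) \<and>
            f0 = (\<Sum>x\<in>F. a x * mon x) \<and> f1 = (\<Sum>x\<in>F. a x * sigma x + b x * mon x)"
          apply (rule exI[where x="\<lambda>x. const (Poly_Mapping.lookup f0 x)"])
          apply (rule exI[where x="\<lambda>x. const (Poly_Mapping.lookup (const ?t' * (q - piR q)) x)"])
          using 1 2 3 by blast
        then show ?thesis unfolding J_iff using S by blast
      qed
      have g0: "act n g f0 = mon A"
        unfolding f0_def by (rule act_inverse[OF Spoly_mon[OF Ae] h(2)])
      have g1: "act n g f1 = const ?t' * sigma A"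
        unfolding f1_def q_def by (simp add: act_scale act_inverse[OF Spoly_sigma h(2)])
      show "def_gen n m I (\<lambda>A B. ?t' * c A B) A \<in> act_eps n g J"
        unfolding def_gen_scaled act_eps_def
        by (rule image_eqI[of _ _ "(f0, f1)"]) (use J0 g0 g1 in auto)
    qed
  qed
qed

end




context bsetup
begin

lemma eig_char:
  assumes ba: "borel_act_is n m I g c (\<lambda>A B. t * c A B)"
    and hg: "\<And>a b. a \<le> n \<Longrightarrow> b \<le> n \<Longrightarrow> mmul n h g a b = idm a b"
    and A: "A \<in> F"
  shows "Poly_Mapping.keys (act n h (mon A)) \<subseteq> F \<and> const t * piR (act n h (sigma A)) = phi (act n h (mon A))"
proof -
  have "(mon A, const t * sigma A) \<in> act_eps n g J"
    using ba A unfolding borel_act_is_def by (metis def_gen_scaled)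
  then obtain f0 f1 where f: "(f0, f1) \<in> J" "act n g f0 = mon A" "act n g f1 = const t * sigma A"
    unfolding act_eps_def by auto
  have S: "f0 \<in> Spoly n" "f1 \<in> Spoly n" using f(1) unfolding J_iff by auto
  have e0: "f0 = act n h (mon A)" using act_inverse[OF S(1) hg] f(2) by simp
  have e1: "f1 = const t * act n h (sigma A)" using act_inverse[OF S(2) hg] f(3) by (simp add: act_scale)
  have kA: "Poly_Mapping.keys (mon A :: 'k mpoly) \<subseteq> Pmn m n" using A by (simp add: Fset_def)
  have k0: "Poly_Mapping.keys f0 \<subseteq> Pmn m n" unfolding e0 by (rule keys_act_Pmn[OF kA])
  have k1: "Poly_Mapping.keys f1 \<subseteq> Pmn m n" unfolding e1
    using keys_scale keys_act_Pmn[OF keys_sigma_Pmn] by blast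
  show ?thesis using J_char[OF f(1) k0 k1] e0 e1 by (simp add: piR_scale)
qed

lemma sum_single_term:
  fixes f :: "nat \<Rightarrow> 'a::comm_monoid_add"
  assumes "x \<le> M" "\<And>k. k \<le> M \<Longrightarrow> k \<noteq> x \<Longrightarrow> f k = 0"
  shows "(\<Sum>k\<le>M. f k) = f x"
proof -
  have "(\<Sum>k\<le>M. f k) = (\<Sum>k\<le>M. if k = x then f x else 0)"
    using assms(2) by (intro sum.cong refl) auto
  then show ?thesis using assms(1) by simp
qed

lemma lookup_le_tdeg': "Poly_Mapping.lookup A i \<le> tdeg A"
proof (cases "i \<in> Poly_Mapping.keys A")
  case True then show ?thesis unfolding tdeg_def by (intro member_le_sum) auto
qed (simp add: in_keys_iff)

lemma sum_atMost_extend':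
  fixes g :: "nat \<Rightarrow> 'a::comm_monoid_add"
  assumes "b \<le> M"
  shows "(\<Sum>k\<le>b. g k) = (\<Sum>k\<le>M. if k \<le> b then g k else 0)"
proof -
  have "(\<Sum>k\<le>M. if k \<le> b then g k else 0) = sum g {k\<in>{..M}. k \<le> b}"
    by (rule sum.inter_filter[symmetric]) simp
  also have "{k\<in>{..M}. k \<le> b} = {..b}" using assms by auto
  finally show ?thesis by simp
qed

lemma lookup_phi_el:
  assumes i: "i \<in> {1..n}" and j_def: "j = i - 1" and A: "A \<in> F"
  shows "Poly_Mapping.lookup (phi (act n (el j i s) (mon A))) C =
    (\<Sum>k\<le>m. s ^ k * (if k \<le> Poly_Mapping.lookup A i then of_nat (Poly_Mapping.lookup A i choose k) * c (shj j i k A) C else 0))"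
proof -
  have ij: "j \<noteq> i" "j < i" "i \<le> n" "j \<le> n" using i by (auto simp: j_def)
  have Ae: "is_expo n A" using A by (simp add: Fset_def Pmn_def)
  have "Poly_Mapping.lookup (phi (act n (el j i s) (mon A))) C
      = (\<Sum>A'\<in>F. (\<Sum>k\<le>Poly_Mapping.lookup A i. (if shj j i k A = A' then of_nat (Poly_Mapping.lookup A i choose k) * s ^ k * c A' C else 0)))"
    unfolding lookup_phi act_el_mon[OF ij(1,3,4) Ae]
    apply (intro sum.cong refl)
    apply (simp add: lookup_sum lookup_const_mult lookup_mon sum_distrib_right)
    apply (intro sum.cong refl)
    apply simp
    done
  also have "\<dots> = (\<Sum>k\<le>Poly_Mapping.lookup A i. \<Sum>A'\<in>F. (if shj j i k A = A' then of_nat (Poly_Mapping.lookup A i choose k) * s ^ k * c A' C else 0))"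
    by (rule sum.swap)
  also have "\<dots> = (\<Sum>k\<le>Poly_Mapping.lookup A i. of_nat (Poly_Mapping.lookup A i choose k) * s ^ k * c (shj j i k A) C)"
    using F_closed[OF A ij(2,3)] finite_F by (intro sum.cong refl) (simp add: sum.delta)
  also have "\<dots> = (\<Sum>k\<le>m. s ^ k * (if k \<le> Poly_Mapping.lookup A i then of_nat (Poly_Mapping.lookup A i choose k) * c (shj j i k A) C else 0))"
    using lookup_le_tdeg'[of A i] A
    by (subst sum_atMost_extend'[of _ m]) (auto simp: Fset_def Pmn_def intro!: sum.cong)
  finally show ?thesis .
qed

lemma lookup_act_el_sigma:
  assumes i: "i \<in> {1..n}" and j_def: "j = i - 1"
  shows "Poly_Mapping.lookup (act n (el j i s) (sigma A)) C =
    (\<Sum>k\<le>m. s ^ k * (if k \<le> Poly_Mapping.lookup C j then of_nat (Poly_Mapping.lookup C i + k choose k) * c A (shj i j k C) else 0))"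
proof -
  have ij: "j \<noteq> i" "j < i" "i \<le> n" "j \<le> n" using i by (auto simp: j_def)
  have isexpoR: "is_expo n A" if "A \<in> R" for A using that by (simp add: Rset_def Pmn_def)
  have "Poly_Mapping.lookup (act n (el j i s) (sigma A)) C
      = (\<Sum>B\<in>R. c A B * (\<Sum>k\<le>Poly_Mapping.lookup B i. of_nat (Poly_Mapping.lookup B i choose k) * s ^ k * (if shj j i k B = C then 1 else 0)))"
    unfolding sigma_def act_sum act_scale lookup_sum
    by (intro sum.cong refl) (simp add: act_el_mon[OF ij(1,3,4)] isexpoR lookup_sum lookup_const_mult lookup_mon)
  also have "\<dots> = (\<Sum>B\<in>R. \<Sum>k\<le>m. (if k \<le> Poly_Mapping.lookup B i \<and> shj j i k B = C then c A B * of_nat (Poly_Mapping.lookup B i choose k) * s ^ k else 0))"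
  proof (intro sum.cong refl)
    fix B assume B: "B \<in> R"
    have "Poly_Mapping.lookup B i \<le> m" using lookup_le_tdeg'[of B i] B by (simp add: Rset_def Pmn_def)
    then show "c A B * (\<Sum>k\<le>Poly_Mapping.lookup B i. of_nat (Poly_Mapping.lookup B i choose k) * s ^ k * (if shj j i k B = C then 1 else 0))
      = (\<Sum>k\<le>m. (if k \<le> Poly_Mapping.lookup B i \<and> shj j i k B = C then c A B * of_nat (Poly_Mapping.lookup B i choose k) * s ^ k else 0))"
      by (subst sum_atMost_extend'[of _ m]) (auto simp: sum_distrib_left intro!: sum.cong)
  qed
  also have "\<dots> = (\<Sum>k\<le>m. \<Sum>B\<in>R. (if k \<le> Poly_Mapping.lookup B i \<and> shj j i k B = C then c A B * of_nat (Poly_Mapping.lookup B i choose k) * s ^ k else 0))"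
    by (rule sum.swap)
  also have "\<dots> = (\<Sum>k\<le>m. s ^ k * (if k \<le> Poly_Mapping.lookup C j then of_nat (Poly_Mapping.lookup C i + k choose k) * c A (shj i j k C) else 0))"
  proof (intro sum.cong refl)
    fix k
    let ?X = "shj i j k C"
    have "(\<Sum>B\<in>R. (if k \<le> Poly_Mapping.lookup B i \<and> shj j i k B = C then c A B * of_nat (Poly_Mapping.lookup B i choose k) * s ^ k else 0))
        = (\<Sum>B\<in>R. (if B = ?X then (if k \<le> Poly_Mapping.lookup C j then c A ?X * of_nat (Poly_Mapping.lookup ?X i choose k) * s ^ k else 0) else 0))"
      by (intro sum.cong refl) (auto simp: shj_back[OF ij(1)])
    also have "\<dots> = (if ?X \<in> R then (if k \<le> Poly_Mapping.lookup C j then c A ?X * of_nat (Poly_Mapping.lookup ?X i choose k) * s ^ k else 0) else 0)"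
      using finite_R by (simp add: sum.delta')
    also have "\<dots> = s ^ k * (if k \<le> Poly_Mapping.lookup C j then of_nat (Poly_Mapping.lookup C i + k choose k) * c A (shj i j k C) else 0)"
      using c_nz[of A ?X] ij by (auto simp: lookup_shj)
    finally show "(\<Sum>B\<in>R. (if k \<le> Poly_Mapping.lookup B i \<and> shj j i k B = C then c A B * of_nat (Poly_Mapping.lookup B i choose k) * s ^ k else 0))
      = s ^ k * (if k \<le> Poly_Mapping.lookup C j then of_nat (Poly_Mapping.lookup C i + k choose k) * c A (shj i j k C) else 0)" .
  qed
  finally show ?thesis .
qed

end




context bsetup
begin

lemma dprod_e: "dprod (\<lambda>l. if l = l0 then a else 1) X = a ^ Poly_Mapping.lookup X l0"
proof -
  have "dprod (\<lambda>l. if l = l0 then a else 1) X = (\<Prod>l\<in>Poly_Mapping.keys X \<union> {l0}. (if l = l0 then a else 1) ^ Poly_Mapping.lookup X l)"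
    by (rule dprod_superset) auto
  also have "\<dots> = (\<Prod>l\<in>Poly_Mapping.keys X \<union> {l0}. if l = l0 then a ^ Poly_Mapping.lookup X l0 else 1)"
    by (intro prod.cong refl) auto
  also have "\<dots> = a ^ Poly_Mapping.lookup X l0" by (simp add: prod.delta')
  finally show ?thesis .
qed

lemma two_pow_inj: "(2::'k) ^ x = 2 ^ y \<Longrightarrow> x = y"
proof -
  assume "(2::'k) ^ x = 2 ^ y"
  then have "(of_nat (2 ^ x) :: 'k) = of_nat (2 ^ y)" by simp
  then have "(2::nat) ^ x = 2 ^ y" by (simp only: of_nat_eq_iff)
  then show "x = y" by simp
qed

lemma diag_weight:
  assumes eig: "borel_eigenvector n m I c" and l0: "l0 \<le> n"
  shows "\<exists>t. \<forall>A C. c A C \<noteq> 0 \<longrightarrow> t * 2 ^ Poly_Mapping.lookup C l0 = (2::'k) ^ Poly_Mapping.lookup A l0"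
proof -
  define e where "e = (\<lambda>l. if l = l0 then (2::'k) else 1)"
  define e' where "e' = (\<lambda>l. if l = l0 then (1/2::'k) else 1)"
  have gB: "dg e' \<in> borel n" by (rule dg_borel) (auto simp: e'_def)
  obtain t where ba: "borel_act_is n m I (dg e') c (\<lambda>A B. t * c A B)"
    using eig gB unfolding borel_eigenvector_def by blast
  have hg: "mmul n (dg e) (dg e') a b = idm a b" if "a \<le> n" "b \<le> n" for a b
    using that by (simp add: mmul_dg_left e_def e'_def dg_def idm_def)
  have isexpoF: "is_expo n A" if "A \<in> F" for A using that by (simp add: Fset_def Pmn_def)
  have isexpoR: "is_expo n A" if "A \<in> R" for A using that by (simp add: Rset_def Pmn_def)
  have "t * 2 ^ Poly_Mapping.lookup C l0 = (2::'k) ^ Poly_Mapping.lookup A l0" if cAC: "c A C \<noteq> 0" for A C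
  proof -
    have A: "A \<in> F" and C: "C \<in> R" using c_nz[OF cAC] by auto
    have eq: "const t * piR (act n (dg e) (sigma A)) = phi (act n (dg e) (mon A))"
      using eig_char[OF ba hg A] by blast
    have l1: "Poly_Mapping.lookup (act n (dg e) (sigma A)) C = c A C * 2 ^ Poly_Mapping.lookup C l0"
    proof -
      have "act n (dg e) (sigma A) = (\<Sum>B\<in>R. const (c A B * dprod e B) * mon B)"
        unfolding sigma_def act_sum act_scale
        by (intro sum.cong refl) (simp add: act_dg_mon isexpoR mult.assoc const_mult)
      then show ?thesis using finite_R C by (simp add: lookup_sum_const_mon e_def dprod_e)
    qed
    have l2: "phi (act n (dg e) (mon A)) = const (2 ^ Poly_Mapping.lookup A l0) * sigma A"
      by (simp add: act_dg_mon isexpoF A phi_scale phi_mon e_def dprod_e)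
    have "Poly_Mapping.lookup (const t * piR (act n (dg e) (sigma A))) C = Poly_Mapping.lookup (phi (act n (dg e) (mon A))) C"
      using eq by simp
    then have "t * (c A C * 2 ^ Poly_Mapping.lookup C l0) = 2 ^ Poly_Mapping.lookup A l0 * c A C"
      by (simp add: lookup_const_mult lookup_piR C l1 l2 lookup_sigma)
    then show ?thesis using cAC by (simp add: ac_simps)
  qed
  then show ?thesis by blast
qed

lemma weights:
  assumes eig: "borel_eigenvector n m I c" and nz: "c A0 B0 \<noteq> 0"
  shows "\<And>A C. c A C \<noteq> 0 \<Longrightarrow> wt (\<lambda>l. int (Poly_Mapping.lookup B0 l) - int (Poly_Mapping.lookup A0 l)) A C"
proof -
  fix A C assume cAC: "c A C \<noteq> 0"
  have ex: "is_expo n A" "is_expo n C" "is_expo n A0" "is_expo n B0"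
    using c_nz[OF cAC] c_nz[OF nz] by (auto simp: Fset_def Rset_def Pmn_def)
  have "int (Poly_Mapping.lookup C l) = int (Poly_Mapping.lookup A l) + (int (Poly_Mapping.lookup B0 l) - int (Poly_Mapping.lookup A0 l))" for l
  proof (cases "l \<le> n")
    case True
    obtain t where t: "\<forall>A C. c A C \<noteq> 0 \<longrightarrow> t * 2 ^ Poly_Mapping.lookup C l = (2::'k) ^ Poly_Mapping.lookup A l"
      using diag_weight[OF eig True] by blast
    have e1: "t * 2 ^ Poly_Mapping.lookup C l = (2::'k) ^ Poly_Mapping.lookup A l" using t cAC by blast
    have e2: "t * 2 ^ Poly_Mapping.lookup B0 l = (2::'k) ^ Poly_Mapping.lookup A0 l" using t nz by blast
    have "(2::'k) ^ Poly_Mapping.lookup A l * 2 ^ Poly_Mapping.lookup B0 l = 2 ^ Poly_Mapping.lookup A0 l * 2 ^ Poly_Mapping.lookup C l"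
      by (simp add: e1[symmetric] e2[symmetric] ac_simps)
    then have "(2::'k) ^ (Poly_Mapping.lookup A l + Poly_Mapping.lookup B0 l) = 2 ^ (Poly_Mapping.lookup A0 l + Poly_Mapping.lookup C l)"
      by (simp add: power_add)
    then have "Poly_Mapping.lookup A l + Poly_Mapping.lookup B0 l = Poly_Mapping.lookup A0 l + Poly_Mapping.lookup C l"
      by (rule two_pow_inj)
    then show ?thesis by linarith
  next
    case False
    then show ?thesis using ex by (simp add: is_expo_lookup)
  qed
  then show "wt (\<lambda>l. int (Poly_Mapping.lookup B0 l) - int (Poly_Mapping.lookup A0 l)) A C" by (simp add: wt_def)
qed

end




locale esetup = bsetup n m I c for n m and I :: "'k::field_char_0 mpoly set" and c +
  fixes K :: "nat \<Rightarrow> int" and A0 B0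
  assumes eig: "borel_eigenvector n m I c"
    and wK: "\<And>A B. c A B \<noteq> 0 \<Longrightarrow> wt K A B"
    and nz0: "c A0 B0 \<noteq> 0"
begin

definition Lf :: "nat \<Rightarrow> nat \<Rightarrow> expo \<Rightarrow> expo \<Rightarrow> nat \<Rightarrow> 'k" where
  "Lf i j A C k = (if k \<le> Poly_Mapping.lookup C j then of_nat (Poly_Mapping.lookup C i + k choose k) * c A (shj i j k C) else 0)"

definition Rf :: "nat \<Rightarrow> nat \<Rightarrow> expo \<Rightarrow> expo \<Rightarrow> nat \<Rightarrow> 'k" where
  "Rf i j A C k = (if k \<le> Poly_Mapping.lookup A i then of_nat (Poly_Mapping.lookup A i choose k) * c (shj j i k A) C else 0)"

lemma uni_eq:
  assumes i: "i \<in> {1..n}" and j_def: "j = i - 1"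
  shows "\<exists>t. \<forall>A\<in>F. \<forall>C\<in>R. t * (\<Sum>k\<le>m. Lf i j A C k) = (\<Sum>k\<le>m. Rf i j A C k)"
proof -
  have ij: "j \<noteq> i" "j < i" "i \<le> n" "j \<le> n" using i by (auto simp: j_def)
  have gB: "el j i (-1::'k) \<in> borel n" by (rule el_borel[OF ij(2,3)])
  obtain t where ba: "borel_act_is n m I (el j i (-1)) c (\<lambda>A B. t * c A B)"
    using eig gB unfolding borel_eigenvector_def by blast
  have hg: "mmul n (el j i 1) (el j i (-1)) a b = idm a b" if "a \<le> n" "b \<le> n" for a b
    using el_el[OF that(1) ij(3,1), of 1 "-1" b] by (simp add: el_zero)
  have "t * (\<Sum>k\<le>m. Lf i j A C k) = (\<Sum>k\<le>m. Rf i j A C k)" if A: "A \<in> F" and C: "C \<in> R" for A C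
  proof -
    have eq: "const t * piR (act n (el j i 1) (sigma A)) = phi (act n (el j i 1) (mon A))"
      using eig_char[OF ba hg A] by blast
    then have "Poly_Mapping.lookup (const t * piR (act n (el j i 1) (sigma A))) C = Poly_Mapping.lookup (phi (act n (el j i 1) (mon A))) C"
      by simp
    then show ?thesis
      by (simp add: lookup_const_mult lookup_piR C lookup_act_el_sigma[OF i j_def] lookup_phi_el[OF i j_def A] Lf_def Rf_def)
  qed
  then show ?thesis by blast
qed

lemma A0B0: "A0 \<in> F" "B0 \<in> R" using c_nz[OF nz0] by auto

lemma tdeg_m: "A \<in> F \<Longrightarrow> tdeg A = m" "A \<in> R \<Longrightarrow> tdeg A = m"
  by (auto simp: Fset_def Rset_def Pmn_def)

lemma lk_le_m: "A \<in> F \<Longrightarrow> Poly_Mapping.lookup A i \<le> m" "A \<in> R \<Longrightarrow> Poly_Mapping.lookup A i \<le> m"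
  using lookup_le_tdeg'[of A i] tdeg_m by auto

lemma t_one:
  assumes i: "i \<in> {1..n}" and j_def: "j = i - 1"
    and t: "\<forall>A\<in>F. \<forall>C\<in>R. t * (\<Sum>k\<le>m. Lf i j A C k) = (\<Sum>k\<le>m. Rf i j A C k)"
  shows "t = 1"
proof -
  have ij: "j \<noteq> i" using i j_def by auto
  have w0: "wt K A0 B0" using wK nz0 by simp
  have L: "(\<Sum>k\<le>m. Lf i j A0 B0 k) = c A0 B0"
  proof -
    have "(\<Sum>k\<le>m. Lf i j A0 B0 k) = Lf i j A0 B0 0"
    proof (rule sum_single_term)
      fix k assume k: "k \<le> m" "k \<noteq> 0"
      show "Lf i j A0 B0 k = 0"
      proof (rule ccontr)
        assume "Lf i j A0 B0 k \<noteq> 0"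
        then have "c A0 (shj i j k B0) \<noteq> 0" by (auto simp: Lf_def split: if_splits)
        then have "shj i j k B0 = B0" using wt_uniq_right[OF wK w0] by blast
        then have "Poly_Mapping.lookup (shj i j k B0) i = Poly_Mapping.lookup B0 i" by simp
        then show False using ij k by (simp add: lookup_shj)
      qed
    qed simp
    then show ?thesis by (simp add: Lf_def)
  qed
  have R: "(\<Sum>k\<le>m. Rf i j A0 B0 k) = c A0 B0"
  proof -
    have "(\<Sum>k\<le>m. Rf i j A0 B0 k) = Rf i j A0 B0 0"
    proof (rule sum_single_term)
      fix k assume k: "k \<le> m" "k \<noteq> 0"
      show "Rf i j A0 B0 k = 0"
      proof (rule ccontr)
        assume "Rf i j A0 B0 k \<noteq> 0"
        then have c: "c (shj j i k A0) B0 \<noteq> 0" and kA: "k \<le> Poly_Mapping.lookup A0 i"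
          by (auto simp: Rf_def split: if_splits)
        then have "shj j i k A0 = A0" using wt_uniq_left[OF wK[OF c] w0] by blast
        then have "Poly_Mapping.lookup (shj j i k A0) i = Poly_Mapping.lookup A0 i" by simp
        then show False using ij k kA by (simp add: lookup_shj)
      qed
    qed simp
    then show ?thesis by (simp add: Rf_def)
  qed
  have "t * c A0 B0 = c A0 B0" using t A0B0 L R by metis
  then show ?thesis using nz0 by simp
qed

lemma uni_eq1:
  assumes i: "i \<in> {1..n}" and j_def: "j = i - 1" and A: "A \<in> F" and C: "C \<in> R"
  shows "(\<Sum>k\<le>m. Lf i j A C k) = (\<Sum>k\<le>m. Rf i j A C k)"
proof -
  obtain t where t: "\<forall>A\<in>F. \<forall>C\<in>R. t * (\<Sum>k\<le>m. Lf i j A C k) = (\<Sum>k\<le>m. Rf i j A C k)"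
    using uni_eq[OF i j_def] by blast
  have "t = 1" by (rule t_one[OF i j_def t])
  then show ?thesis using t A C by simp
qed

end




context esetup
begin

lemma sumR1:
  assumes i: "i \<in> {1..n}" and j_def: "j = i - 1" and A: "A \<in> F" and ai: "1 \<le> Poly_Mapping.lookup A i"
    and w: "wt K (addDelta A i) X"
  shows "(\<Sum>k\<le>m. Rf i j A X k) = of_nat (Poly_Mapping.lookup A i) * c (addDelta A i) X"
proof -
  have ij: "j \<noteq> i" using i j_def by auto
  have ad: "addDelta A i = shj j i 1 A" by (simp add: addDelta_shj j_def)
  have "(\<Sum>k\<le>m. Rf i j A X k) = Rf i j A X 1"
  proof (rule sum_single_term)
    show "1 \<le> m" using ai lk_le_m(1)[OF A, of i] by simp
    fix k assume k: "k \<le> m" "k \<noteq> 1"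
    show "Rf i j A X k = 0"
    proof (rule ccontr)
      assume "Rf i j A X k \<noteq> 0"
      then have c: "c (shj j i k A) X \<noteq> 0" and kA: "k \<le> Poly_Mapping.lookup A i"
        by (auto simp: Rf_def split: if_splits)
      have "shj j i k A = shj j i 1 A" using wt_uniq_left[OF wK[OF c]] w ad by metis
      then show False using shj_inj[OF ij kA ai] k by simp
    qed
  qed
  then show ?thesis using ai by (simp add: Rf_def ad)
qed

lemma sumL1:
  assumes i: "i \<in> {1..n}" and j_def: "j = i - 1" and cAB: "c A B \<noteq> 0" and bi: "1 \<le> Poly_Mapping.lookup B i"
  shows "(\<Sum>k\<le>m. Lf i j A (addDelta B i) k) = of_nat (Poly_Mapping.lookup B i) * c A B"
proof -
  have ij: "j \<noteq> i" using i j_def by auto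
  let ?X = "addDelta B i"
  have Xl: "Poly_Mapping.lookup ?X i = Poly_Mapping.lookup B i - 1" "Poly_Mapping.lookup ?X j = Poly_Mapping.lookup B j + 1"
    using ij by (auto simp: addDelta_shj lookup_shj j_def)
  have bk: "shj i j 1 ?X = B"
  proof (rule poly_mapping_eqI)
    fix l show "Poly_Mapping.lookup (shj i j 1 ?X) l = Poly_Mapping.lookup B l"
      using ij bi by (auto simp: addDelta_shj lookup_shj j_def)
  qed
  have w: "wt K A B" by (rule wK[OF cAB])
  have "(\<Sum>k\<le>m. Lf i j A ?X k) = Lf i j A ?X 1"
  proof (rule sum_single_term)
    show "1 \<le> m" using bi lk_le_m(2)[of B i] c_nz[OF cAB] by simp
    fix k assume k: "k \<le> m" "k \<noteq> 1"
    show "Lf i j A ?X k = 0"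
    proof (rule ccontr)
      assume "Lf i j A ?X k \<noteq> 0"
      then have c: "c A (shj i j k ?X) \<noteq> 0" by (auto simp: Lf_def split: if_splits)
      have "shj i j k ?X = B" using wt_uniq_right[OF wK[OF c] w] .
      then have "Poly_Mapping.lookup (shj i j k ?X) i = Poly_Mapping.lookup B i" by simp
      then show False using ij k Xl bi by (simp add: lookup_shj)
    qed
  qed
  also have "\<dots> = of_nat (Poly_Mapping.lookup B i) * c A B"
    using Xl bi bk by (simp add: Lf_def)
  finally show ?thesis .
qed

lemma addDelta_Pmn:
  assumes "A \<in> Pmn m n" "i \<in> {1..n}" "1 \<le> Poly_Mapping.lookup A i"
  shows "addDelta A i \<in> Pmn m n"
  using assms by (auto simp: addDelta_shj intro!: Pmn_shj)

lemma addDelta_notPmn: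
  assumes "A \<in> Pmn m n" "i \<in> {1..n}" "Poly_Mapping.lookup A i = 0"
  shows "addDelta A i \<notin> Pmn m n"
proof -
  have "addDelta A i = A + Poly_Mapping.single (i - 1) 1"
  proof (rule poly_mapping_eqI)
    fix l show "Poly_Mapping.lookup (addDelta A i) l = Poly_Mapping.lookup (A + Poly_Mapping.single (i - 1) 1) l"
      using assms by (auto simp: addDelta_shj lookup_shj lookup_add lookup_single when_def)
  qed
  then have "tdeg (addDelta A i) = m + 1" using assms(1) by (simp add: tdeg_add Pmn_def)
  then show ?thesis by (simp add: Pmn_def)
qed

lemma F1_step:
  assumes A: "A \<in> F1" and i: "i \<in> {1..n}" and ai: "1 \<le> Poly_Mapping.lookup A i"
  shows "addDelta A i \<in> F1"
proof -
  define j where "j = i - 1"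
  have AF: "A \<in> F" using A F1_F by blast
  have A'F: "addDelta A i \<in> F" using F_closed[OF AF, of j i 1] i ai by (auto simp: addDelta_shj j_def)
  have "c (addDelta A i) C = 0" if C: "C \<in> R" for C
  proof (rule ccontr)
    assume nz: "c (addDelta A i) C \<noteq> 0"
    have eq: "(\<Sum>k\<le>m. Lf i j A C k) = (\<Sum>k\<le>m. Rf i j A C k)" by (rule uni_eq1[OF i j_def AF C])
    have "Lf i j A C k = 0" for k using F1_zero[OF A, of "shj i j k C"] by (simp add: Lf_def)
    then have "(\<Sum>k\<le>m. Lf i j A C k) = 0" by simp
    moreover have "(\<Sum>k\<le>m. Rf i j A C k) = of_nat (Poly_Mapping.lookup A i) * c (addDelta A i) C"
      by (rule sumR1[OF i j_def AF ai wK[OF nz]])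
    ultimately show False using eq nz ai by simp
  qed
  then show ?thesis using A'F by (auto simp: F1_def)
qed

lemma F2_stepR:
  assumes cAB: "c A B \<noteq> 0" and i: "i \<in> {1..n}" and bi: "1 \<le> Poly_Mapping.lookup B i"
    and XR: "addDelta B i \<in> R"
  shows "addDelta B i \<in> F2"
proof -
  define j where "j = i - 1"
  have AF: "A \<in> F" using c_nz[OF cAB] by blast
  have eq: "(\<Sum>k\<le>m. Lf i j A (addDelta B i) k) = (\<Sum>k\<le>m. Rf i j A (addDelta B i) k)"
    by (rule uni_eq1[OF i j_def AF XR])
  have "(\<Sum>k\<le>m. Lf i j A (addDelta B i) k) \<noteq> 0"
    using sumL1[OF i j_def cAB bi] cAB bi by simp
  then obtain k where "Rf i j A (addDelta B i) k \<noteq> 0" using eq by (metis (no_types, lifting) sum.neutral)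
  then have "c (shj j i k A) (addDelta B i) \<noteq> 0" by (auto simp: Rf_def split: if_splits)
  then show ?thesis by (rule c_F2)
qed

lemma ratio_prop:
  assumes A: "A \<in> F - F1" and w: "wt K A B" and i: "i \<in> {1..n}" and A': "addDelta A i \<in> F - F1"
  shows "c (addDelta A i) (addDelta B i) = of_nat (Poly_Mapping.lookup B i) / of_nat (Poly_Mapping.lookup A i) * c A B"
proof -
  define j where "j = i - 1"
  have AF: "A \<in> F" using A by blast
  have ai: "1 \<le> Poly_Mapping.lookup A i"
  proof (rule ccontr)
    assume "\<not> 1 \<le> Poly_Mapping.lookup A i"
    then have "addDelta A i \<notin> Pmn m n" using addDelta_notPmn[OF F_Pmn[OF AF] i] by simp
    then show False using A' F_Pmn by blast
  qed
  obtain B0' where B0': "c A B0' \<noteq> 0" using A notF1 by blast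
  have "B0' = B" using wt_uniq_right[OF wK[OF B0'] w] .
  then have cAB: "c A B \<noteq> 0" using B0' by simp
  have BR: "B \<in> R" using c_nz[OF cAB] by blast
  show ?thesis
  proof (cases "Poly_Mapping.lookup B i = 0")
    case True
    then have "addDelta B i \<notin> R" using addDelta_notPmn[OF R_Pmn[OF BR] i] R_Pmn by blast
    then have "c (addDelta A i) (addDelta B i) = 0" using c_nz by blast
    then show ?thesis using True by simp
  next
    case False
    then have bi: "1 \<le> Poly_Mapping.lookup B i" by simp
    let ?X = "addDelta B i"
    have XP: "?X \<in> Pmn m n" by (rule addDelta_Pmn[OF R_Pmn[OF BR] i bi])
    have wX: "wt K (addDelta A i) ?X" using wt_addDelta[of i A B K] i ai bi w by simp
    have XR: "?X \<in> R"
    proof (rule ccontr)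
      assume "?X \<notin> R"
      then have XF: "?X \<in> F" using Pmn_FR[OF XP] by blast
      obtain C' where C': "c (addDelta A i) C' \<noteq> 0" using A' notF1 by blast
      have "C' = ?X" using wt_uniq_right[OF wK[OF C'] wX] .
      then show False using c_nz[OF C'] XF FR_disj by blast
    qed
    have eq: "(\<Sum>k\<le>m. Lf i j A ?X k) = (\<Sum>k\<le>m. Rf i j A ?X k)" by (rule uni_eq1[OF i j_def AF XR])
    have "of_nat (Poly_Mapping.lookup B i) * c A B = of_nat (Poly_Mapping.lookup A i) * c (addDelta A i) ?X"
      using eq sumL1[OF i j_def cAB bi] sumR1[OF i j_def AF ai wX] by simp
    then show ?thesis using ai by (simp add: field_simps)
  qed
qed

lemma filter_F1: "is_filter m n F1"
  unfolding is_filter_def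
proof (intro conjI ballI allI impI)
  show "F1 \<subseteq> Pmn m n" using F1_F F_Pmn by blast
  fix A A' assume A: "A \<in> F1" and "P_le m n A A'"
  then have "(P_step m n)\<^sup>*\<^sup>* A A'" by (simp add: P_le_def)
  then show "A' \<in> F1" using A
  proof (induction rule: rtranclp_induct)
    case (step y z)
    then show ?case using F1_step by (auto simp: P_step_def)
  qed simp
qed

lemma filter_F2: "is_filter m n F2"
  unfolding is_filter_def
proof (intro conjI ballI allI impI)
  show "F2 \<subseteq> Pmn m n" by (auto simp: F2_def Fset_def Rset_def)
  fix A A' assume A: "A \<in> F2" and "P_le m n A A'"
  then have "(P_step m n)\<^sup>*\<^sup>* A A'" by (simp add: P_le_def)
  then show "A' \<in> F2" using A
  proof (induction rule: rtranclp_induct)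
    case (step y z)
    then obtain i where i: "i \<in> {1..n}" "1 \<le> Poly_Mapping.lookup y i" "z = addDelta y i"
      by (auto simp: P_step_def)
    show ?case
    proof (cases "y \<in> F")
      case True
      then have "z \<in> F" using F_closed[OF True, of "i - 1" i 1] i by (auto simp: addDelta_shj)
      then show ?thesis by (simp add: F2_def)
    next
      case False
      then have yR: "y \<in> R" and ex: "\<exists>x\<in>F. c x y \<noteq> 0" using step by (auto simp: F2_def)
      then obtain x where x: "c x y \<noteq> 0" by blast
      have zP: "z \<in> Pmn m n" using addDelta_Pmn[OF R_Pmn[OF yR] i(1,2)] i(3) by simp
      show ?thesis
      proof (cases "z \<in> F")
        case True then show ?thesis by (simp add: F2_def)
      next
        case False
        then have "z \<in> R" using Pmn_FR[OF zP] by blast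
        then show ?thesis using F2_stepR[OF x i(1,2)] i(3) by simp
      qed
    qed
  qed simp
qed

end




theorem mainTheorem8:
  fixes n m :: nat
    and I :: "'k::{alg_closed_field, field_char_0} mpoly set"
    and c :: "expo \<Rightarrow> expo \<Rightarrow> 'k"
  assumes hilb_point: "homog_ideal n I" "saturated n I" "gotzmann_number n I m"
    and borel_fixed: "borel_fixed n I"
    and tangent: "hilb_tangent n m I c"
    and nonzero: "\<exists>A B. c A B \<noteq> 0"
  shows "borel_eigenvector n m I c \<longleftrightarrow>
    (let F = Fset n m I; R = Rset n m I;
         F' = F - {A\<in>F. \<exists>B\<in>R. c A B \<noteq> 0};
         F'' = F \<union> {B\<in>R. \<exists>A\<in>F. c A B \<noteq> 0}
     in (\<exists>K::nat \<Rightarrow> int. (\<forall>i>n. K i = 0) \<and> (\<Sum>i\<le>n. K i) = 0 \<and>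
           (\<forall>A B. c A B \<noteq> 0 \<longrightarrow> (\<forall>i. int (Poly_Mapping.lookup B i) - int (Poly_Mapping.lookup A i) = K i)) \<and>
           (\<forall>A\<in>F - F'. \<forall>B. (\<forall>i. int (Poly_Mapping.lookup B i) = int (Poly_Mapping.lookup A i) + K i) \<longrightarrow>
              (\<forall>i\<in>{1..n}. addDelta A i \<in> F - F' \<longrightarrow>
                 c (addDelta A i) (addDelta B i)
                   = of_nat (Poly_Mapping.lookup B i) / of_nat (Poly_Mapping.lookup A i) * c A B)))
        \<and> is_filter m n F' \<and> is_filter m n F'')"
proof -
  interpret bsetup n m I c
    using hilb_point(1) borel_fixed tangent by unfold_locales
  obtain A0 B0 where nz: "c A0 B0 \<noteq> 0" using nonzero by blast
  have F1eq: "Fset n m I - {A \<in> Fset n m I. \<exists>B\<in>Rset n m I. c A B \<noteq> 0} = F1" by (simp add: F1_def)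
  have F2eq: "Fset n m I \<union> {B \<in> Rset n m I. \<exists>A\<in>Fset n m I. c A B \<noteq> 0} = F2" by (simp add: F2_def)
  have ex0: "is_expo n A0" "is_expo n B0" using c_nz[OF nz] by (auto simp: Fset_def Rset_def Pmn_def)
  have td0: "tdeg A0 = m" "tdeg B0 = m" using c_nz[OF nz] by (auto simp: Fset_def Rset_def Pmn_def)
  show ?thesis
    unfolding Let_def F1eq F2eq
  proof
    assume eig: "borel_eigenvector n m I c"
    define K where "K l = int (Poly_Mapping.lookup B0 l) - int (Poly_Mapping.lookup A0 l)" for l
    have wK: "\<And>A B. c A B \<noteq> 0 \<Longrightarrow> wt K A B"
      using weights[OF eig nz] unfolding K_def[abs_def] by blast
    interpret esetup n m I c K A0 B0
      using eig wK nz by unfold_locales auto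
    show "(\<exists>K::nat \<Rightarrow> int. (\<forall>i>n. K i = 0) \<and> (\<Sum>i\<le>n. K i) = 0 \<and>
           (\<forall>A B. c A B \<noteq> 0 \<longrightarrow> (\<forall>i. int (Poly_Mapping.lookup B i) - int (Poly_Mapping.lookup A i) = K i)) \<and>
           (\<forall>A\<in>Fset n m I - F1. \<forall>B. (\<forall>i. int (Poly_Mapping.lookup B i) = int (Poly_Mapping.lookup A i) + K i) \<longrightarrow>
              (\<forall>i\<in>{1..n}. addDelta A i \<in> Fset n m I - F1 \<longrightarrow>
                 c (addDelta A i) (addDelta B i)
                   = of_nat (Poly_Mapping.lookup B i) / of_nat (Poly_Mapping.lookup A i) * c A B)))
        \<and> is_filter m n F1 \<and> is_filter m n F2"
    proof (intro exI[of _ K] conjI allI impI ballI)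
      show "K i = 0" if "i > n" for i using that ex0 by (simp add: K_def is_expo_lookup)
      have "(\<Sum>i\<le>n. K i) = int (tdeg B0) - int (tdeg A0)"
        by (simp add: K_def sum_subtractf tdeg_sum_le[OF ex0(1)] tdeg_sum_le[OF ex0(2)])
      then show "(\<Sum>i\<le>n. K i) = 0" using td0 by simp
      show "int (Poly_Mapping.lookup B i) - int (Poly_Mapping.lookup A i) = K i" if "c A B \<noteq> 0" for A B i
        using wK[OF that] by (simp add: wt_diff)
      show "c (addDelta A i) (addDelta B i) = of_nat (Poly_Mapping.lookup B i) / of_nat (Poly_Mapping.lookup A i) * c A B"
        if "A \<in> Fset n m I - F1" "\<forall>i. int (Poly_Mapping.lookup B i) = int (Poly_Mapping.lookup A i) + K i"
           "i \<in> {1..n}" "addDelta A i \<in> Fset n m I - F1" for A B i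
        using ratio_prop[OF that(1) _ that(3,4)] that(2) by (simp add: wt_def)
      show "is_filter m n F1" by (rule filter_F1)
      show "is_filter m n F2" by (rule filter_F2)
    qed
  next
    assume "(\<exists>K::nat \<Rightarrow> int. (\<forall>i>n. K i = 0) \<and> (\<Sum>i\<le>n. K i) = 0 \<and>
           (\<forall>A B. c A B \<noteq> 0 \<longrightarrow> (\<forall>i. int (Poly_Mapping.lookup B i) - int (Poly_Mapping.lookup A i) = K i)) \<and>
           (\<forall>A\<in>Fset n m I - F1. \<forall>B. (\<forall>i. int (Poly_Mapping.lookup B i) = int (Poly_Mapping.lookup A i) + K i) \<longrightarrow>
              (\<forall>i\<in>{1..n}. addDelta A i \<in> Fset n m I - F1 \<longrightarrow>
                 c (addDelta A i) (addDelta B i)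
                   = of_nat (Poly_Mapping.lookup B i) / of_nat (Poly_Mapping.lookup A i) * c A B)))
        \<and> is_filter m n F1 \<and> is_filter m n F2"
    then obtain K :: "nat \<Rightarrow> int" where
      K1: "\<forall>A B. c A B \<noteq> 0 \<longrightarrow> (\<forall>i. int (Poly_Mapping.lookup B i) - int (Poly_Mapping.lookup A i) = K i)" and
      K2: "\<forall>A\<in>Fset n m I - F1. \<forall>B. (\<forall>i. int (Poly_Mapping.lookup B i) = int (Poly_Mapping.lookup A i) + K i) \<longrightarrow>
              (\<forall>i\<in>{1..n}. addDelta A i \<in> Fset n m I - F1 \<longrightarrow>
                 c (addDelta A i) (addDelta B i)
                   = of_nat (Poly_Mapping.lookup B i) / of_nat (Poly_Mapping.lookup A i) * c A B)" and
      f1: "is_filter m n F1" and f2: "is_filter m n F2"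
      by blast
    interpret rsetup n m I c K
    proof unfold_locales
      show "wt K A B" if "c A B \<noteq> 0" for A B using K1 that by (simp add: wt_diff)
      show "is_filter m n F1" by (rule f1)
      show "is_filter m n F2" by (rule f2)
      show "c (addDelta A i) (addDelta B i) = of_nat (Poly_Mapping.lookup B i) / of_nat (Poly_Mapping.lookup A i) * c A B"
        if "A \<in> Fset n m I - F1" "wt K A B" "i \<in> {1..n}" "addDelta A i \<in> Fset n m I - F1" for A B i
        using K2 that by (simp add: wt_def)
    qed
    show "borel_eigenvector n m I c" by (rule rhs_imp_eigen[OF nz])
  qed
qed



end
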